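(* For every sufficiently large real $\lambda>0$, $\operatorname{ind}C(\lambda)=\mathrm Z_+$.
   Context: Let $n\ge 2$ be an integer, let $a_1,\dots,a_n>0$ with $\sum_k a_k=1$, and let $d_1,\dots,d_n,\beta_1,\dots,\beta_n$ be real numbers with $\sum_k a_kd_k^2<1$. Put $\alpha_0=0$ and $\alpha_k=\alpha_{k-1}+a_k$. Let $P\in L_2[0,1]$ be the unique function with $P(\alpha_{k-1}+a_kx)=\beta_k+d_kP(x)$ for a.e. $x\in[0,1]$, $k=1,\dots,n$. Assume there is $m\in\{1,\dots,n\}$ with $d_k=0$ for all $k\ne m$. Let $\mathfrak H=\{y\in W_2^1[0,1]: y(0)=y(1)=0\}$ with inner product $\langle y,z\rangle=\int_0^1 y'\overline{z'}\,dx$. For $k=1,\dots,n-1$ put $\gamma_k=\alpha_{k-1}$ if $k\ne m$, $\gamma_m=\alpha_m-a_ma_n$; $\delta_k=\alpha_{k+1}$ if $k\ne m-1$, $\delta_{m-1}=\alpha_{m-1}+a_ma_1$. Let $e_k\in\mathfrak H$ equal $(x-\gamma_k)/(\alpha_k-\gamma_k)$ on $[\gamma_k,\alpha_k]$, $(\delta_k-x)/(\delta_k-\alpha_k)$ on $[\alpha_k,\delta_k]$, and $0$ elsewhere, and let $\mathfrak H_2=\operatorname{span}\{e_1,\dots,e_{n-1}\}$. For $\lambda\in\mathbb R$ let $C(\lambda)$ be the self-adjoint operator on $\mathfrak H_2$ (with the inner product of $\mathfrak H$) such that $\langle C(\lambda)y,z\rangle=\int_0^1\big(y'\overline{z'}+\lambda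 P\cdot(y\overline z)'\big)dx$ for $y,z\in\mathfrak H_2$. For $k=1,\dots,n-1$ define $\zeta_{m-1}=\beta_m-\beta_{m-1}+d_m\beta_1$ (if $m-1\ge1$), $\zeta_m=\beta_{m+1}-\beta_m-d_m\beta_n$ (if $m\le n-1$), and $\zeta_k=\beta_{k+1}-\beta_k$ for the other $k$. Let $\mathrm Z_\pm=\#\{k\in\{1,\dots,n-1\}:\pm\zeta_k>0\}$. For a self-adjoint operator $E$ on a Hilbert space $\mathfrak E$, $\operatorname{ind}E$ is the supremum of dimensions of subspaces $\mathfrak M\subseteq\mathfrak E$ for which there is $\varepsilon>0$ with $\langle Ey,y\rangle\le-\varepsilon\|y\|^2$ for all $y\in\mathfrak M$. *)

theory Defs
  imports "HOL-Analysis.Analysis" "HOL-Library.Function_Algebras" "HOL-Library.Extended_Nat"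
begin

text \<open>Together with the pointwise additive group structure (Function_Algebras) this is the
  complex vector space in which the Sobolev space H lives.\<close>
definition fscale :: "complex \<Rightarrow> (real \<Rightarrow> complex) \<Rightarrow> (real \<Rightarrow> complex)" where
  "fscale c f = (\<lambda>x. c * f x)"

definition alpha :: "(nat \<Rightarrow> real) \<Rightarrow> nat \<Rightarrow> real" where
  "alpha a k = (\<Sum>i=1..k. a i)"

definition gam :: "(nat \<Rightarrow> real) \<Rightarrow> nat \<Rightarrow> nat \<Rightarrow> nat \<Rightarrow> real" where
  "gam a n m k = (if k = m then alpha a m - a m * a n else alpha a (k - 1))"

definition del :: "(nat \<Rightarrow> real) \<Rightarrow> nat \<Rightarrow> nat \<Rightarrow> real" where
  "del a m k = (if m \<ge> 2 \<and> k = m - 1 then alpha a (m - 1) + a m * a 1 else alpha a (k + 1))"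

definition hat :: "real \<Rightarrow> real \<Rightarrow> real \<Rightarrow> real \<Rightarrow> real" where
  "hat g p q x = (if g \<le> x \<and> x \<le> p then (x - g) / (p - g)
                  else if p \<le> x \<and> x \<le> q then (q - x) / (q - p) else 0)"

definition ebasis :: "(nat \<Rightarrow> real) \<Rightarrow> nat \<Rightarrow> nat \<Rightarrow> nat \<Rightarrow> real \<Rightarrow> complex" where
  "ebasis a n m k = (\<lambda>x. complex_of_real (hat (gam a n m k) (alpha a k) (del a m k) x))"

definition H2 :: "(nat \<Rightarrow> real) \<Rightarrow> nat \<Rightarrow> nat \<Rightarrow> (real \<Rightarrow> complex) set" where
  "H2 a n m = module.span fscale (ebasis a n m ` {1..n-1})"

definition innerH :: "(real \<Rightarrow> complex) \<Rightarrow> (real \<Rightarrow> complex) \<Rightarrow> complex" where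
  "innerH y z = set_lebesgue_integral lborel {0..1}
      (\<lambda>x. vector_derivative y (at x) * cnj (vector_derivative z (at x)))"

definition Cform :: "(real \<Rightarrow> real) \<Rightarrow> real \<Rightarrow> (real \<Rightarrow> complex) \<Rightarrow> (real \<Rightarrow> complex) \<Rightarrow> complex" where
  "Cform P lam y z = set_lebesgue_integral lborel {0..1}
      (\<lambda>x. vector_derivative y (at x) * cnj (vector_derivative z (at x))
           + complex_of_real (lam * P x) * vector_derivative (\<lambda>t. y t * cnj (z t)) (at x))"

text \<open>Negative index of the self-adjoint operator E on the space V (with the inner product of H),
  given through its form Eform y z = <E y, z>: the supremum of the dimensions of subspaces M of V
  on which <E y, y> \<le> -eps ||y||^2 for some eps > 0.  (<E y,y> is real, we take its real part.)\<close>
definition ind :: "((real \<Rightarrow> complex) \<Rightarrow> (real \<Rightarrow> complex) \<Rightarrow> complex) \<Rightarrow> (real \<Rightarrow> complex) set \<Rightarrow> enat" where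
  "ind Eform V = Sup {enat (vector_space.dim fscale M) | M.
      module.subspace fscale M \<and> M \<subseteq> V \<and>
      (\<exists>eps>0. \<forall>y\<in>M. Re (Eform y y) \<le> - eps * Re (innerH y y))}"

definition zeta :: "nat \<Rightarrow> nat \<Rightarrow> (nat \<Rightarrow> real) \<Rightarrow> (nat \<Rightarrow> real) \<Rightarrow> nat \<Rightarrow> real" where
  "zeta n m d \<beta> k = (if m \<ge> 2 \<and> k = m - 1 then \<beta> m - \<beta> (m - 1) + d m * \<beta> 1
                     else if m \<le> n - 1 \<and> k = m then \<beta> (m + 1) - \<beta> m - d m * \<beta> n
                     else \<beta> (k + 1) - \<beta> k)"

definition Zplus :: "nat \<Rightarrow> nat \<Rightarrow> (nat \<Rightarrow> real) \<Rightarrow> (nat \<Rightarrow> real) \<Rightarrow> nat" where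
  "Zplus n m d \<beta> = card {k \<in> {1..n-1}. zeta n m d \<beta> k > 0}"

end

theory Submission
  imports Defs
begin

lemma hat_alt:
  assumes "g < p" "p < q"
  shows "hat g p q x = max 0 (min ((x-g)/(p-g)) ((q-x)/(q-p)))"
proof -
  have pg: "p - g > 0" and qp: "q - p > 0" using assms by auto
  consider "x < g" | "g \<le> x" "x \<le> p" | "p < x" "x \<le> q" | "q < x" by linarith
  then show ?thesis
  proof cases
    case 1 then have "(x-g)/(p-g) < 0" using pg by (simp add: divide_neg_pos)
    then show ?thesis using 1 assms by (auto simp: hat_def)
  next
    case 2
    have a: "(x-g)/(p-g) \<le> 1" using 2 pg by (simp add: divide_le_eq)
    have b: "1 \<le> (q-x)/(q-p)" using 2 qp by (simp add: le_divide_eq)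
    have c: "0 \<le> (x-g)/(p-g)" using 2 pg by simp
    show ?thesis using 2 a b c by (auto simp: hat_def)
  next
    case 3
    have a: "1 \<le> (x-g)/(p-g)" using 3 pg by (simp add: le_divide_eq)
    have b: "(q-x)/(q-p) \<le> 1" using 3 qp by (simp add: divide_le_eq)
    have c: "0 \<le> (q-x)/(q-p)" using 3 qp by simp
    have d: "min ((x-g)/(p-g)) ((q-x)/(q-p)) = (q-x)/(q-p)" using a b by linarith
    show ?thesis using 3 c d by (auto simp: hat_def)
  next
    case 4 then have "(q-x)/(q-p) < 0" using qp by (simp add: divide_neg_pos)
    then show ?thesis using 4 assms by (auto simp: hat_def)
  qed
qed

lemma hat_cont: "g < p \<Longrightarrow> p < q \<Longrightarrow> continuous_on UNIV (hat g p q)"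
proof -
  assume h: "g < p" "p < q"
  have "continuous_on UNIV (\<lambda>x. max 0 (min ((x-g)/(p-g)) ((q-x)/(q-p))))"
    using h by (auto intro!: continuous_intros)
  moreover have "hat g p q = (\<lambda>x. max 0 (min ((x-g)/(p-g)) ((q-x)/(q-p))))"
    by (rule ext) (rule hat_alt[OF h])
  ultimately show ?thesis by simp
qed

lemma hat_zero: "g < p \<Longrightarrow> p < q \<Longrightarrow> x \<le> g \<or> q \<le> x \<Longrightarrow> hat g p q x = 0"
  by (auto simp: hat_def)

lemma hat_peak: "g < p \<Longrightarrow> p < q \<Longrightarrow> hat g p q p = 1"
  by (auto simp: hat_def)

definition hatd :: "real \<Rightarrow> real \<Rightarrow> real \<Rightarrow> real \<Rightarrow> real" where
  "hatd g p q x = (if g < x \<and> x < p then 1/(p-g) else if p < x \<and> x < q then -1/(q-p) else 0)"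

lemma hatd_zero: "g < p \<Longrightarrow> p < q \<Longrightarrow> x \<le> g \<or> q \<le> x \<Longrightarrow> hatd g p q x = 0"
  by (auto simp: hatd_def)

lemma hatd_meas[measurable]: "hatd g p q \<in> borel_measurable borel"
  unfolding hatd_def by measurable

lemma hatd_bound: "g < p \<Longrightarrow> p < q \<Longrightarrow> \<bar>hatd g p q x\<bar> \<le> 1/(p-g) + 1/(q-p)"
  by (auto simp: hatd_def)

lemma hat_deriv:
  assumes "g < p" "p < q" "x \<notin> {g,p,q}"
  shows "(hat g p q has_real_derivative hatd g p q x) (at x)"
proof -
  consider "x < g" | "g < x" "x < p" | "p < x" "x < q" | "q < x" using assms by force
  then show ?thesis
  proof cases
    case 1
    show ?thesis
      by (rule has_field_derivative_transform_within_open[where f="\<lambda>_. 0" and S="{..<g}"])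
         (use 1 assms in \<open>auto simp: hat_def hatd_def intro!: derivative_eq_intros\<close>)
  next
    case 2
    show ?thesis
      by (rule has_field_derivative_transform_within_open[where f="\<lambda>x. (x-g)/(p-g)" and S="{g<..<p}"])
         (use 2 assms in \<open>auto simp: hat_def hatd_def intro!: derivative_eq_intros\<close>)
  next
    case 3
    show ?thesis
      by (rule has_field_derivative_transform_within_open[where f="\<lambda>x. (q-x)/(q-p)" and S="{p<..<q}"])
         (use 3 assms in \<open>auto simp: hat_def hatd_def divide_inverse intro!: derivative_eq_intros\<close>)
  next
    case 4
    show ?thesis
      by (rule has_field_derivative_transform_within_open[where f="\<lambda>_. 0" and S="{q<..}"])
         (use 4 assms in \<open>auto simp: hat_def hatd_def intro!: derivative_eq_intros\<close>)
  qed
qed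

definition nice :: "(real \<Rightarrow> complex) \<Rightarrow> (real \<Rightarrow> complex) \<Rightarrow> real set \<Rightarrow> bool" where
  "nice g g' S \<longleftrightarrow> finite S \<and> continuous_on UNIV g \<and>
     (\<forall>x. x \<notin> S \<longrightarrow> (g has_vector_derivative g' x) (at x)) \<and>
     g' \<in> borel_measurable borel \<and> (\<exists>B. \<forall>x. norm (g' x) \<le> B)"

lemma setint_bdd:
  fixes h :: "real \<Rightarrow> 'b::{banach, second_countable_topology}"
  assumes "h \<in> borel_measurable borel" "\<And>x. norm (h x) \<le> B"
  shows "set_integrable lborel {u..v} h"
proof (rule set_integrable_bound[where f="\<lambda>_. B"])
  show "set_integrable lborel {u..v} (\<lambda>_. B)"
    by (rule borel_integrable_atLeastAtMost') (auto intro: continuous_intros)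
  show "set_borel_measurable lborel {u..v} h" using assms(1) unfolding set_borel_measurable_def by measurable
  show "AE x in lborel. x \<in> {u..v} \<longrightarrow> norm (h x) \<le> norm B"
    using assms(2) by (auto intro!: always_eventually order_trans[OF _ abs_ge_self])
qed

lemma ftc_leb:
  assumes "nice g g' S" "u \<le> v"
  shows "(LINT x:{u..v}|lborel. g' x) = g v - g u"
proof -
  obtain B where B: "\<And>x. norm (g' x) \<le> B" and fS: "finite S" and c: "continuous_on UNIV g"
    and d: "\<And>x. x \<notin> S \<Longrightarrow> (g has_vector_derivative g' x) (at x)" and m: "g' \<in> borel_measurable borel"
    using assms(1) unfolding nice_def by blast
  have si: "set_integrable lborel {u..v} g'" by (rule setint_bdd[OF m B])
  have "(g' has_integral (g v - g u)) {u..v}"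
    by (rule fundamental_theorem_of_calculus_interior_strong[OF fS assms(2)])
       (use d c in \<open>auto intro: continuous_on_subset\<close>)
  then show ?thesis using set_borel_integral_eq_integral(2)[OF si] by (simp add: integral_unique)
qed

lemma affine_setint:
  fixes f :: "real \<Rightarrow> 'b::{banach, second_countable_topology}"
  assumes "c > 0"
  shows "(LINT x:{t..t+c}|lborel. f x) = c *\<^sub>R (LINT u:{0..1}|lborel. f (t + c*u))"
proof -
  have "(LINT x:{t..t+c}|lborel. f x) = integral\<^sup>L lborel (\<lambda>x. indicator {t..t+c} x *\<^sub>R f x)"
    by (simp add: set_lebesgue_integral_def)
  also have "\<dots> = \<bar>c\<bar> *\<^sub>R integral\<^sup>L lborel (\<lambda>u. indicator {t..t+c} (t + c*u) *\<^sub>R f (t + c*u))"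
    by (rule lborel_integral_real_affine) (use assms in auto)
  also have "(\<lambda>u. indicator {t..t+c} (t + c*u) *\<^sub>R f (t + c*u)) = (\<lambda>u. indicator {0..1} u *\<^sub>R f (t + c*u))"
  proof
    fix u
    have "(t + c*u \<in> {t..t+c}) = (u \<in> {0..1})"
      using assms by (auto simp: zero_le_mult_iff mult_le_cancel_left1)
    then show "indicator {t..t+c} (t + c*u) *\<^sub>R f (t + c*u) = indicator {0..1} u *\<^sub>R f (t + c*u)"
      by (simp add: indicator_def)
  qed
  finally show ?thesis using assms by (simp add: set_lebesgue_integral_def)
qed

lemma setint_Q:
  fixes Q :: "real \<Rightarrow> real" and h :: "real \<Rightarrow> complex"
  assumes Q: "integrable lborel Q" and hm: "h \<in> borel_measurable borel" and hb: "\<And>x. norm (h x) \<le> B"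
    and A: "A \<in> sets borel"
  shows "set_integrable lborel A (\<lambda>x. complex_of_real (Q x) * h x)"
  unfolding set_integrable_def
proof (rule Bochner_Integration.integrable_bound[where f="\<lambda>x. B * Q x"])
  show "integrable lborel (\<lambda>x. B * Q x)" using Q by simp
  have Qm: "Q \<in> borel_measurable borel" using borel_measurable_integrable[OF Q] by simp
  show "(\<lambda>x. indicator A x *\<^sub>R (complex_of_real (Q x) * h x)) \<in> borel_measurable lborel"
    using Qm hm A by measurable
  show "AE x in lborel. norm (indicator A x *\<^sub>R (complex_of_real (Q x) * h x)) \<le> norm (B * Q x)"
  proof (rule always_eventually, rule allI)
    fix x
    have B0: "0 \<le> B" using hb[of x] norm_ge_zero order_trans by blast
    have "norm (indicator A x *\<^sub>R (complex_of_real (Q x) * h x)) \<le> norm (complex_of_real (Q x) * h x)"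
      by (simp add: indicator_def)
    also have "\<dots> = \<bar>Q x\<bar> * norm (h x)" by (simp add: norm_mult)
    also have "\<dots> \<le> \<bar>Q x\<bar> * B" by (rule mult_left_mono[OF hb]) simp
    also have "\<dots> = norm (B * Q x)" using B0 by (simp add: abs_mult)
    finally show "norm (indicator A x *\<^sub>R (complex_of_real (Q x) * h x)) \<le> norm (B * Q x)" .
  qed
qed

lemma split_setint:
  fixes F :: "real \<Rightarrow> 'b::{banach, second_countable_topology}" and s :: "nat \<Rightarrow> real"
  assumes mono: "\<And>k. k < j \<Longrightarrow> s k \<le> s (Suc k)"
    and si: "set_integrable lborel {s 0..s j} F"
  shows "(LINT x:{s 0..s j}|lborel. F x) = (\<Sum>k=1..j. LINT x:{s (k-1)..s k}|lborel. F x)"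
  using mono si
proof (induction j)
  case 0
  have "AE x in lborel. indicator {s 0} x *\<^sub>R F x = 0"
    using AE_lborel_singleton[of "s 0"] by (rule eventually_mono) (simp add: indicator_def)
  then have "set_lebesgue_integral lborel {s 0} F = 0"
    unfolding set_lebesgue_integral_def by (rule integral_eq_zero_AE)
  then show ?case by simp
next
  case (Suc j)
  have mono': "\<And>k. k < j \<Longrightarrow> s k \<le> s (Suc k)" using Suc.prems by simp
  have le: "s 0 \<le> s j" using mono'
  proof (induction j)
    case 0 then show ?case by simp
  next
    case (Suc j)
    have "s 0 \<le> s j" using Suc by simp
    moreover have "s j \<le> s (Suc j)" using Suc.prems by simp
    ultimately show ?case by linarith
  qed
  have sj: "s j \<le> s (Suc j)" using Suc.prems by simp
  have un: "{s 0..s (Suc j)} = {s 0..s j} \<union> {s j..s (Suc j)}" using le sj by auto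
  have si1: "set_integrable lborel {s 0..s j} F"
    by (rule set_integrable_subset[OF Suc.prems(2)]) (use sj in auto)
  have si2: "set_integrable lborel {s j..s (Suc j)} F"
    by (rule set_integrable_subset[OF Suc.prems(2)]) (use le in auto)
  have ae: "AE x in lborel. \<not> (x \<in> {s 0..s j} \<and> x \<in> {s j..s (Suc j)})"
  proof (rule AE_I[where N="{s j}"])
    show "{x \<in> space lborel. \<not> \<not> (x \<in> {s 0..s j} \<and> x \<in> {s j..s (Suc j)})} \<subseteq> {s j}" by auto
  qed auto
  have "(LINT x:{s 0..s (Suc j)}|lborel. F x) = (LINT x:{s 0..s j}|lborel. F x) + (LINT x:{s j..s (Suc j)}|lborel. F x)"
    unfolding un by (rule set_integral_Un_AE[OF ae _ _ si1 si2]) auto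
  also have "\<dots> = (\<Sum>k=1..Suc j. LINT x:{s (k-1)..s k}|lborel. F x)"
    using Suc.IH[OF mono' si1] by simp
  finally show ?case .
qed

definition Qf :: "(real \<Rightarrow> real) \<Rightarrow> real \<Rightarrow> real" where
  "Qf P x = indicator {0..1} x * P x"

lemma alpha_0[simp]: "alpha a 0 = 0" by (simp add: alpha_def)
lemma alpha_Suc: "alpha a (Suc k) = alpha a k + a (Suc k)" by (simp add: alpha_def)
lemma alpha_prev: "k \<ge> 1 \<Longrightarrow> alpha a k = alpha a (k-1) + a k"
  using alpha_Suc[of a "k-1"] by simp

locale setting =
  fixes n m :: nat and a d \<beta> :: "nat \<Rightarrow> real" and P :: "real \<Rightarrow> real"
  assumes n2: "n \<ge> 2"
    and apos: "\<And>k. k \<in> {1..n} \<Longrightarrow> a k > 0"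
    and asum: "(\<Sum>k=1..n. a k) = 1"
    and m: "m \<in> {1..n}"
    and dzero: "\<And>k. k \<in> {1..n} \<Longrightarrow> k \<noteq> m \<Longrightarrow> d k = 0"
    and Pmeas: "set_borel_measurable lborel {0..1} P"
    and PL2: "set_integrable lborel {0..1} (\<lambda>x. (P x)\<^sup>2)"
    and Pself: "\<And>k. k \<in> {1..n} \<Longrightarrow>
       AE x in lborel. x \<in> {0..1} \<longrightarrow> P (alpha a (k - 1) + a k * x) = \<beta> k + d k * P x"

context setting
begin

lemma alpha_n: "alpha a n = 1" using asum by (simp add: alpha_def)

lemma alpha_mono_Suc: "k < n \<Longrightarrow> alpha a k \<le> alpha a (Suc k)"
  using apos[of "Suc k"] by (simp add: alpha_Suc)

lemma alpha_le: "k \<le> j \<Longrightarrow> j \<le> n \<Longrightarrow> alpha a k \<le> alpha a j"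
proof (induction j)
  case 0 then show ?case by simp
next
  case (Suc j)
  show ?case
  proof (cases "k = Suc j")
    case False
    then have "alpha a k \<le> alpha a j" using Suc by simp
    also have "\<dots> \<le> alpha a (Suc j)" using alpha_mono_Suc[of j] Suc.prems by simp
    finally show ?thesis .
  qed simp
qed

lemma alpha_less: "k < j \<Longrightarrow> j \<le> n \<Longrightarrow> alpha a k < alpha a j"
proof -
  assume h: "k < j" "j \<le> n"
  have "alpha a k \<le> alpha a (j-1)" using h by (intro alpha_le) auto
  also have "\<dots> < alpha a j" using alpha_prev[of j a] apos[of j] h by simp
  finally show ?thesis .
qed

lemma alpha_nonneg: "0 \<le> alpha a k" if "k \<le> n"
  using alpha_le[of 0 k] that by simp

lemma alpha_le1: "alpha a k \<le> 1" if "k \<le> n"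
  using alpha_le[of k n] that alpha_n by simp

lemma Pm[measurable]: "Qf P \<in> borel_measurable borel"
  using Pmeas unfolding set_borel_measurable_def Qf_def by simp

lemma Qint: "integrable lborel (Qf P)"
proof -
  have "set_integrable lborel {0..1} (\<lambda>x. 1 + (P x)\<^sup>2)"
    by (rule set_integral_add(1)[OF _ PL2]) (rule borel_integrable_atLeastAtMost', simp)
  then have "set_integrable lborel {0..1} P"
  proof (rule set_integrable_bound)
    show "set_borel_measurable lborel {0..1} P" by (rule Pmeas)
    have "\<bar>y\<bar> \<le> \<bar>1 + y\<^sup>2\<bar>" for y :: real
    proof -
      have "0 \<le> (\<bar>y\<bar> - 1/2)\<^sup>2" by simp
      then have "\<bar>y\<bar> \<le> \<bar>y\<bar>*\<bar>y\<bar> + 1/4" by (simp add: power2_eq_square algebra_simps)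
      then show ?thesis by (simp add: power2_eq_square abs_mult_self_eq)
    qed
    then show "AE x in lborel. x \<in> {0..1} \<longrightarrow> norm (P x) \<le> norm (1 + (P x)\<^sup>2)" by auto
  qed
  then show ?thesis unfolding set_integrable_def Qf_def by simp
qed

lemma Qself: "k \<in> {1..n} \<Longrightarrow>
   AE x in lborel. x \<in> {0..1} \<longrightarrow> Qf P (alpha a (k - 1) + a k * x) = \<beta> k + d k * Qf P x"
proof -
  assume k: "k \<in> {1..n}"
  show ?thesis
  proof (rule eventually_mono[OF Pself[OF k]], intro impI)
    fix x :: real assume h: "x \<in> {0..1} \<longrightarrow> P (alpha a (k - 1) + a k * x) = \<beta> k + d k * P x" "x \<in> {0..1}"
    have ak: "alpha a k = alpha a (k-1) + a k" using k by (intro alpha_prev) auto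
    have "0 \<le> alpha a (k-1)" using k by (intro alpha_nonneg) auto
    moreover have "0 \<le> a k * x" using apos[OF k] h(2) by simp
    moreover have "a k * x \<le> a k" using apos[OF k] h(2) by (simp add: mult_left_le)
    moreover have "alpha a k \<le> 1" using k by (intro alpha_le1) auto
    ultimately have "alpha a (k - 1) + a k * x \<in> {0..1}" using ak by auto
    then show "Qf P (alpha a (k - 1) + a k * x) = \<beta> k + d k * Qf P x"
      using h by (simp add: Qf_def)
  qed
qed

lemma piece:
  assumes k: "k \<in> {1..n}" and ng: "nice g g' S"
  shows "(LINT x:{alpha a (k-1)..alpha a k}|lborel. complex_of_real (Qf P x) * g' x)
     = complex_of_real (\<beta> k) * (g (alpha a k) - g (alpha a (k-1)))
       + complex_of_real (d k) * (LINT u:{0..1}|lborel. complex_of_real (Qf P u) *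
            (complex_of_real (a k) * g' (alpha a (k-1) + a k * u)))"
proof -
  obtain B where B: "\<And>x. norm (g' x) \<le> B" and gm[measurable]: "g' \<in> borel_measurable borel"
    using ng unfolding nice_def by blast
  define t where "t = alpha a (k-1)"
  define c where "c = a k"
  have c0: "c > 0" using apos[OF k] by (simp add: c_def)
  have ak: "alpha a k = t + c" using k by (simp add: t_def c_def alpha_prev)
  have hm[measurable]: "(\<lambda>u. g' (t + c*u)) \<in> borel_measurable borel" by measurable
  have hb: "\<And>u. norm (g' (t + c*u)) \<le> B" using B by simp
  have i1: "set_integrable lborel {0..1} (\<lambda>u. g' (t + c*u))" by (rule setint_bdd[OF hm hb])
  have i2: "set_integrable lborel {0..1} (\<lambda>u. complex_of_real (Qf P u) * g' (t + c*u))"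
    by (rule setint_Q[OF Qint hm hb]) simp
  have "(LINT x:{alpha a (k-1)..alpha a k}|lborel. complex_of_real (Qf P x) * g' x)
     = c *\<^sub>R (LINT u:{0..1}|lborel. complex_of_real (Qf P (t + c*u)) * g' (t + c*u))"
    unfolding ak t_def[symmetric] by (rule affine_setint[OF c0])
  also have "(LINT u:{0..1}|lborel. complex_of_real (Qf P (t + c*u)) * g' (t + c*u))
     = (LINT u:{0..1}|lborel. complex_of_real (\<beta> k) * g' (t + c*u) +
          complex_of_real (d k) * (complex_of_real (Qf P u) * g' (t + c*u)))"
  proof (rule set_lebesgue_integral_cong_AE)
    show "AE x\<in>{0..1} in lborel. complex_of_real (Qf P (t + c * x)) * g' (t + c * x) =
        complex_of_real (\<beta> k) * g' (t + c * x) + complex_of_real (d k) * (complex_of_real (Qf P x) * g' (t + c * x))"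
      using Qself[OF k] unfolding t_def c_def
      by (rule eventually_mono) (auto simp: algebra_simps)
  qed measurable
  also have "\<dots> = complex_of_real (\<beta> k) * (LINT u:{0..1}|lborel. g' (t + c*u)) +
       complex_of_real (d k) * (LINT u:{0..1}|lborel. complex_of_real (Qf P u) * g' (t + c*u))"
    using i1 i2 by (subst set_integral_add(2)) auto
  finally have eq1: "(LINT x:{alpha a (k-1)..alpha a k}|lborel. complex_of_real (Qf P x) * g' x)
     = c *\<^sub>R (complex_of_real (\<beta> k) * (LINT u:{0..1}|lborel. g' (t + c*u)) +
       complex_of_real (d k) * (LINT u:{0..1}|lborel. complex_of_real (Qf P u) * g' (t + c*u)))" .
  have eq2: "c *\<^sub>R (LINT u:{0..1}|lborel. g' (t + c*u)) = g (alpha a k) - g (alpha a (k-1))"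
  proof -
    have "c *\<^sub>R (LINT u:{0..1}|lborel. g' (t + c*u)) = (LINT x:{t..t+c}|lborel. g' x)"
      by (rule affine_setint[OF c0, symmetric])
    also have "\<dots> = g (t+c) - g t" by (rule ftc_leb[OF ng]) (use c0 in simp)
    finally show ?thesis by (simp add: ak t_def)
  qed
  have eq3: "c *\<^sub>R (LINT u:{0..1}|lborel. complex_of_real (Qf P u) * g' (t + c*u))
     = (LINT u:{0..1}|lborel. complex_of_real (Qf P u) * (complex_of_real (a k) * g' (alpha a (k-1) + a k * u)))"
    by (simp add: c_def t_def scaleR_conv_of_real mult.left_commute)
  have "c *\<^sub>R (complex_of_real (\<beta> k) * (LINT u:{0..1}|lborel. g' (t + c*u)) +
       complex_of_real (d k) * (LINT u:{0..1}|lborel. complex_of_real (Qf P u) * g' (t + c*u)))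
     = complex_of_real (\<beta> k) * (c *\<^sub>R (LINT u:{0..1}|lborel. g' (t + c*u))) +
       complex_of_real (d k) * (c *\<^sub>R (LINT u:{0..1}|lborel. complex_of_real (Qf P u) * g' (t + c*u)))"
    by (simp add: scaleR_add_right)
  then show ?thesis unfolding eq1 eq2 eq3 .
qed

end

context setting
begin

lemma key:
  assumes ng: "nice g g' S"
  shows "(LINT x:{0..1}|lborel. complex_of_real (Qf P x) * g' x)
     = (\<Sum>k=1..n. complex_of_real (\<beta> k) * (g (alpha a k) - g (alpha a (k-1))))
       + complex_of_real (d m) * (LINT u:{0..1}|lborel. complex_of_real (Qf P u) *
            (complex_of_real (a m) * g' (alpha a (m-1) + a m * u)))"
proof -
  obtain B where B: "\<And>x. norm (g' x) \<le> B" and gm[measurable]: "g' \<in> borel_measurable borel"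
    using ng unfolding nice_def by blast
  define J where "J k = (LINT u:{0..1}|lborel. complex_of_real (Qf P u) *
            (complex_of_real (a k) * g' (alpha a (k-1) + a k * u)))" for k
  have si: "set_integrable lborel {alpha a 0..alpha a n} (\<lambda>x. complex_of_real (Qf P x) * g' x)"
    by (rule setint_Q[OF Qint gm B]) simp
  have "(LINT x:{0..1}|lborel. complex_of_real (Qf P x) * g' x)
      = (LINT x:{alpha a 0..alpha a n}|lborel. complex_of_real (Qf P x) * g' x)"
    by (simp add: alpha_n)
  also have "\<dots> = (\<Sum>k=1..n. LINT x:{alpha a (k-1)..alpha a k}|lborel. complex_of_real (Qf P x) * g' x)"
    by (rule split_setint[OF _ si]) (rule alpha_mono_Suc)
  also have "\<dots> = (\<Sum>k=1..n. complex_of_real (\<beta> k) * (g (alpha a k) - g (alpha a (k-1)))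
      + complex_of_real (d k) * J k)"
    by (rule sum.cong[OF refl]) (unfold J_def, rule piece[OF _ ng], simp)
  also have "\<dots> = (\<Sum>k=1..n. complex_of_real (\<beta> k) * (g (alpha a k) - g (alpha a (k-1))))
      + (\<Sum>k=1..n. complex_of_real (d k) * J k)"
    by (rule sum.distrib)
  also have "(\<Sum>k=1..n. complex_of_real (d k) * J k) = complex_of_real (d m) * J m"
  proof -
    have "(\<Sum>k=1..n. complex_of_real (d k) * J k) = complex_of_real (d m) * J m
        + (\<Sum>k\<in>{1..n}-{m}. complex_of_real (d k) * J k)"
      using m by (subst sum.remove[of _ m]) auto
    also have "(\<Sum>k\<in>{1..n}-{m}. complex_of_real (d k) * J k) = 0"
      by (rule sum.neutral) (auto simp: dzero)
    finally show ?thesis by simp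
  qed
  finally show ?thesis by (simp add: J_def)
qed

end

definition hk :: "(nat \<Rightarrow> real) \<Rightarrow> nat \<Rightarrow> nat \<Rightarrow> nat \<Rightarrow> real \<Rightarrow> real" where
  "hk a n m k = hat (gam a n m k) (alpha a k) (del a m k)"
definition hkd :: "(nat \<Rightarrow> real) \<Rightarrow> nat \<Rightarrow> nat \<Rightarrow> nat \<Rightarrow> real \<Rightarrow> real" where
  "hkd a n m k = hatd (gam a n m k) (alpha a k) (del a m k)"

lemma hat_bounds: "g < p \<Longrightarrow> p < q \<Longrightarrow> 0 \<le> hat g p q x \<and> hat g p q x \<le> 1"
  by (auto simp: hat_def divide_le_eq)

context setting
begin

lemma a_le1: "k \<in> {1..n} \<Longrightarrow> a k \<le> 1"
proof -
  assume k: "k \<in> {1..n}"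
  have "0 \<le> alpha a (k-1)" by (rule alpha_nonneg) (use k in auto)
  then show ?thesis using alpha_prev[of k a] alpha_le1[of k] k by auto
qed

lemma gd_facts:
  assumes k: "k \<in> {1..n-1}"
  shows "0 \<le> gam a n m k" "gam a n m k < alpha a k" "alpha a k < del a m k" "del a m k \<le> 1"
    "alpha a (k-1) \<le> gam a n m k" "del a m k \<le> alpha a (k+1)"
proof -
  have ak: "alpha a k = alpha a (k-1) + a k" using k by (intro alpha_prev) auto
  have ak1: "alpha a (k+1) = alpha a k + a (k+1)" by (simp add: alpha_Suc)
  have apk: "a k > 0" "a (k+1) > 0" using k apos by auto
  have an: "0 < a n" "a n \<le> 1" using apos[of n] a_le1[of n] n2 by auto
  have a1: "0 < a 1" "a 1 \<le> 1" using apos[of 1] a_le1[of 1] n2 by auto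
  have nn: "0 \<le> alpha a (k-1)" by (rule alpha_nonneg) (use k in auto)
  have le1: "alpha a (k+1) \<le> 1" by (rule alpha_le1) (use k in auto)
  have g1: "alpha a (k-1) \<le> gam a n m k \<and> gam a n m k < alpha a k"
  proof (cases "k = m")
    case True
    have "a k * a n \<le> a k * 1" using an apk by (intro mult_left_mono) auto
    moreover have "0 < a k * a n" using an apk by simp
    ultimately show ?thesis using True ak by (simp add: gam_def)
  qed (use ak apk in \<open>simp add: gam_def\<close>)
  then show "alpha a (k-1) \<le> gam a n m k" "gam a n m k < alpha a k" by auto
  then show "0 \<le> gam a n m k" using nn by linarith
  have d1: "alpha a k < del a m k \<and> del a m k \<le> alpha a (k+1)"
  proof (cases "m \<ge> 2 \<and> k = m - 1")
    case True
    then have km: "k + 1 = m" by auto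
    have "a m * a 1 \<le> a m * 1" using a1 apos[of m] m by (intro mult_left_mono) auto
    moreover have "0 < a m * a 1" using a1 apos[of m] m by simp
    ultimately show ?thesis using True km ak1 by (auto simp: del_def)
  qed (use ak1 apk in \<open>auto simp add: del_def\<close>)
  then show "alpha a k < del a m k" "del a m k \<le> alpha a (k+1)" by auto
  then show "del a m k \<le> 1" using le1 by linarith
qed

lemma hk_at_alpha:
  assumes j: "j \<in> {1..n-1}" and k: "k \<le> n"
  shows "hk a n m j (alpha a k) = (if j = k then 1 else 0)"
proof (cases "j = k")
  case True
  then show ?thesis using gd_facts[OF j] by (simp add: hk_def hat_peak)
next
  case False
  note f = gd_facts[OF j]
  show ?thesis
  proof (cases "k < j")
    case True
    have "alpha a k \<le> alpha a (j-1)" by (rule alpha_le) (use True j in auto)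
    then show ?thesis using False f by (auto simp: hk_def intro!: hat_zero)
  next
    case nt: False
    have "alpha a (j+1) \<le> alpha a k" by (rule alpha_le) (use nt False k in auto)
    then show ?thesis using False f by (auto simp: hk_def intro!: hat_zero)
  qed
qed

lemma hk_zero_region:
  assumes k: "k \<in> {1..n-1}"
    and x1: "alpha a (m-1) + (if m \<ge> 2 then a m * a 1 else 0) \<le> x"
    and x2: "x \<le> alpha a m - (if m \<le> n-1 then a m * a n else 0)"
  shows "x \<le> gam a n m k \<or> del a m k \<le> x"
proof -
  have am: "0 < a m" using apos m by auto
  have an: "0 < a n" using apos[of n] n2 by auto
  have a1: "0 < a 1" using apos[of 1] n2 by auto
  consider "k + 1 < m" | "k + 1 = m" | "k = m" | "k > m" by linarith
  then show ?thesis
  proof cases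
    case 1
    have "del a m k \<le> alpha a (k+1)" using gd_facts[OF k] by simp
    also have "\<dots> \<le> alpha a (m-1)" by (rule alpha_le) (use 1 m in auto)
    moreover have "0 \<le> a m * a 1" using am a1 by simp
    ultimately show ?thesis using x1 1 by (auto split: if_splits)
  next
    case 2
    then have "m \<ge> 2" "k = m - 1" using k by auto
    then show ?thesis using x1 by (simp add: del_def)
  next
    case 3
    then have "m \<le> n - 1" using k by auto
    then show ?thesis using x2 3 by (simp add: gam_def)
  next
    case 4
    have "alpha a m \<le> alpha a (k-1)" by (rule alpha_le) (use 4 k in auto)
    then have "alpha a m \<le> gam a n m k" using 4 by (simp add: gam_def)
    moreover have "0 \<le> a m * a n" using am an by simp
    ultimately show ?thesis using x2 by (auto split: if_splits)
  qed
qed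

lemma region_alpha:
  assumes j: "j \<in> {1..n-1}"
  shows "alpha a (m-1) + (if m \<ge> 2 then a m * a 1 else 0) \<le> alpha a (m-1) + a m * alpha a j"
    "alpha a (m-1) + a m * alpha a j \<le> alpha a m - (if m \<le> n-1 then a m * a n else 0)"
proof -
  have am: "0 < a m" using apos m by auto
  have "alpha a 1 \<le> alpha a j" by (rule alpha_le) (use j in auto)
  then have "a 1 \<le> alpha a j" by (simp add: alpha_def)
  then have "a m * a 1 \<le> a m * alpha a j" using am by simp
  moreover have "0 \<le> alpha a j" by (rule alpha_nonneg) (use j in auto)
  then have "0 \<le> a m * alpha a j" using am by simp
  ultimately show "alpha a (m-1) + (if m \<ge> 2 then a m * a 1 else 0) \<le> alpha a (m-1) + a m * alpha a j"
    by auto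
  have "alpha a j \<le> alpha a (n-1)" by (rule alpha_le) (use j in auto)
  also have "alpha a (n-1) = 1 - a n" using alpha_prev[of n a] alpha_n n2 by simp
  finally have "a m * alpha a j \<le> a m * (1 - a n)" using am by simp
  moreover have "alpha a m = alpha a (m-1) + a m" using m by (simp add: alpha_prev)
  moreover have "0 \<le> a m * a n" using am apos[of n] n2 by simp
  ultimately show "alpha a (m-1) + a m * alpha a j \<le> alpha a m - (if m \<le> n-1 then a m * a n else 0)"
    by (auto simp: algebra_simps)
qed

lemma region_Im:
  assumes u: "u \<in> {alpha a (m-1)..alpha a m}"
  shows "alpha a (m-1) + (if m \<ge> 2 then a m * a 1 else 0) \<le> alpha a (m-1) + a m * u"
    "alpha a (m-1) + a m * u \<le> alpha a m - (if m \<le> n-1 then a m * a n else 0)"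
proof -
  have am: "0 < a m" using apos m by auto
  have "0 \<le> alpha a (m-1)" by (rule alpha_nonneg) (use m in auto)
  then have u0: "0 \<le> u" using u by auto
  show "alpha a (m-1) + (if m \<ge> 2 then a m * a 1 else 0) \<le> alpha a (m-1) + a m * u"
  proof (cases "m \<ge> 2")
    case True
    have "alpha a 1 \<le> alpha a (m-1)" by (rule alpha_le) (use True m in auto)
    then have "a 1 \<le> u" using u by (simp add: alpha_def)
    then show ?thesis using True am by simp
  qed (use am u0 in simp)
  have amm: "alpha a m = alpha a (m-1) + a m" using m by (simp add: alpha_prev)
  show "alpha a (m-1) + a m * u \<le> alpha a m - (if m \<le> n-1 then a m * a n else 0)"
  proof (cases "m \<le> n - 1")
    case True
    have "alpha a m \<le> alpha a (n-1)" by (rule alpha_le) (use True m in auto)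
    also have "alpha a (n-1) = 1 - a n" using alpha_prev[of n a] alpha_n n2 by simp
    finally have "u \<le> 1 - a n" using u by simp
    then have "a m * u \<le> a m * (1 - a n)" using am by simp
    then show ?thesis using True amm by (simp add: algebra_simps)
  next
    case False
    then have "m = n" using m by auto
    then have "u \<le> 1" using u alpha_n by simp
    then have "a m * u \<le> a m" using am by (simp add: mult_left_le)
    then show ?thesis using False amm by simp
  qed
qed

end

definition Yf :: "(nat \<Rightarrow> real) \<Rightarrow> nat \<Rightarrow> nat \<Rightarrow> (nat \<Rightarrow> complex) \<Rightarrow> real \<Rightarrow> complex" where
  "Yf a n m c x = (\<Sum>k\<in>{1..n-1}. c k * complex_of_real (hk a n m k x))"
definition Ydf :: "(nat \<Rightarrow> real) \<Rightarrow> nat \<Rightarrow> nat \<Rightarrow> (nat \<Rightarrow> complex) \<Rightarrow> real \<Rightarrow> complex" where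
  "Ydf a n m c x = (\<Sum>k\<in>{1..n-1}. c k * complex_of_real (hkd a n m k x))"
definition gf :: "(nat \<Rightarrow> real) \<Rightarrow> nat \<Rightarrow> nat \<Rightarrow> (nat \<Rightarrow> complex) \<Rightarrow> real \<Rightarrow> complex" where
  "gf a n m c x = Yf a n m c x * cnj (Yf a n m c x)"
definition gdf :: "(nat \<Rightarrow> real) \<Rightarrow> nat \<Rightarrow> nat \<Rightarrow> (nat \<Rightarrow> complex) \<Rightarrow> real \<Rightarrow> complex" where
  "gdf a n m c x = Ydf a n m c x * cnj (Yf a n m c x) + Yf a n m c x * cnj (Ydf a n m c x)"
definition Sset :: "(nat \<Rightarrow> real) \<Rightarrow> nat \<Rightarrow> nat \<Rightarrow> real set" where
  "Sset a n m = (\<Union>k\<in>{1..n-1}. {gam a n m k, alpha a k, del a m k})"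

lemma borel_measurable_cnj'[measurable]:
  assumes "f \<in> borel_measurable M"
  shows "(\<lambda>x. cnj (f x)) \<in> borel_measurable M"
proof -
  have "(\<lambda>z::complex. cnj z) \<in> borel_measurable borel"
    by (intro borel_measurable_continuous_onI continuous_on_cnj continuous_on_id)
  from measurable_compose[OF assms this] show ?thesis .
qed

lemma nice_affine:
  assumes ng: "nice g g' S" and c: "c \<noteq> 0"
  shows "nice (\<lambda>u. g (t + c*u)) (\<lambda>u. complex_of_real c * g' (t + c*u)) ((\<lambda>s. (s - t)/c) ` S)"
proof -
  obtain B where B: "\<And>x. norm (g' x) \<le> B" and fS: "finite S" and cg: "continuous_on UNIV g"
    and dg: "\<And>x. x \<notin> S \<Longrightarrow> (g has_vector_derivative g' x) (at x)" and m[measurable]: "g' \<in> borel_measurable borel"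
    using ng unfolding nice_def by blast
  have "continuous_on UNIV (g \<circ> (\<lambda>u. t + c*u))"
    by (rule continuous_on_compose) (auto intro!: continuous_intros intro: continuous_on_subset[OF cg])
  then have cont: "continuous_on UNIV (\<lambda>u. g (t + c*u))" by (simp add: o_def)
  have der: "((\<lambda>u. g (t + c*u)) has_vector_derivative complex_of_real c * g' (t + c*u)) (at u)"
    if u: "u \<notin> (\<lambda>s. (s - t)/c) ` S" for u
  proof -
    have nS: "t + c*u \<notin> S"
    proof
      assume "t + c*u \<in> S"
      moreover have "u = ((t + c*u) - t)/c" using c by simp
      ultimately show False using u by blast
    qed
    have f: "((\<lambda>u. t + c*u) has_vector_derivative c) (at u)"
      using has_real_derivative_iff_has_vector_derivative[THEN iffD1, of "\<lambda>u. t + c*u" c]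
      by (auto intro!: derivative_eq_intros)
    have "((g \<circ> (\<lambda>u. t + c*u)) has_vector_derivative (c *\<^sub>R g' (t + c*u))) (at u)"
      by (rule vector_diff_chain_at[OF f dg[OF nS]])
    then show ?thesis by (simp add: o_def scaleR_conv_of_real)
  qed
  have bd: "norm (complex_of_real c * g' (t + c*u)) \<le> \<bar>c\<bar> * B" for u
    using B[of "t + c*u"] by (simp add: norm_mult mult_left_mono)
  show ?thesis unfolding nice_def using fS cont der bd by (auto intro!: exI[of _ "\<bar>c\<bar> * B"])
qed

context setting
begin

lemma hk_cont: "k \<in> {1..n-1} \<Longrightarrow> continuous_on UNIV (hk a n m k)"
  using gd_facts unfolding hk_def by (intro hat_cont) auto

lemma hk_deriv: "k \<in> {1..n-1} \<Longrightarrow> x \<notin> Sset a n m \<Longrightarrow> (hk a n m k has_real_derivative hkd a n m k x) (at x)"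
  using gd_facts unfolding hk_def hkd_def Sset_def by (intro hat_deriv) auto

lemma hk_bound: "k \<in> {1..n-1} \<Longrightarrow> 0 \<le> hk a n m k x \<and> hk a n m k x \<le> 1"
  using gd_facts unfolding hk_def by (intro hat_bounds) auto

definition Lk :: "nat \<Rightarrow> real" where
  "Lk k = 1/(alpha a k - gam a n m k) + 1/(del a m k - alpha a k)"

lemma hkd_bound: "k \<in> {1..n-1} \<Longrightarrow> \<bar>hkd a n m k x\<bar> \<le> Lk k"
  using gd_facts unfolding hkd_def Lk_def by (intro hatd_bound) auto

lemma Y_cont: "continuous_on UNIV (Yf a n m c)"
proof -
  have "continuous_on UNIV (\<lambda>x. \<Sum>k\<in>{1..n-1}. c k * complex_of_real (hk a n m k x))"
    by (intro continuous_on_sum continuous_on_mult continuous_on_const continuous_on_of_real hk_cont) auto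
  then show ?thesis by (simp add: Yf_def[abs_def])
qed

lemma Y_deriv: "x \<notin> Sset a n m \<Longrightarrow> (Yf a n m c has_vector_derivative Ydf a n m c x) (at x)"
proof -
  assume x: "x \<notin> Sset a n m"
  have "((\<lambda>x. \<Sum>k\<in>{1..n-1}. c k * complex_of_real (hk a n m k x)) has_vector_derivative
        (\<Sum>k\<in>{1..n-1}. c k * complex_of_real (hkd a n m k x))) (at x)"
    by (intro has_vector_derivative_sum has_vector_derivative_mult_right has_vector_derivative_of_real
        hk_deriv x) auto
  then show ?thesis by (simp add: Yf_def[abs_def] Ydf_def)
qed

lemma Yd_meas[measurable]: "Ydf a n m c \<in> borel_measurable borel"
  unfolding Ydf_def[abs_def] hkd_def by measurable

lemma Y_bound: "norm (Yf a n m c x) \<le> (\<Sum>k\<in>{1..n-1}. norm (c k))"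
proof -
  have "norm (Yf a n m c x) \<le> (\<Sum>k\<in>{1..n-1}. norm (c k * complex_of_real (hk a n m k x)))"
    unfolding Yf_def by (rule norm_sum)
  also have "\<dots> \<le> (\<Sum>k\<in>{1..n-1}. norm (c k))"
  proof (rule sum_mono)
    fix k assume k: "k \<in> {1..n-1}"
    show "norm (c k * complex_of_real (hk a n m k x)) \<le> norm (c k)"
      using hk_bound[OF k, of x] by (simp add: norm_mult mult_left_le)
  qed
  finally show ?thesis .
qed

lemma Yd_bound: "norm (Ydf a n m c x) \<le> (\<Sum>k\<in>{1..n-1}. norm (c k) * Lk k)"
proof -
  have "norm (Ydf a n m c x) \<le> (\<Sum>k\<in>{1..n-1}. norm (c k * complex_of_real (hkd a n m k x)))"
    unfolding Ydf_def by (rule norm_sum)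
  also have "\<dots> \<le> (\<Sum>k\<in>{1..n-1}. norm (c k) * Lk k)"
  proof (rule sum_mono)
    fix k assume k: "k \<in> {1..n-1}"
    show "norm (c k * complex_of_real (hkd a n m k x)) \<le> norm (c k) * Lk k"
      using hkd_bound[OF k, of x] by (simp add: norm_mult mult_left_mono)
  qed
  finally show ?thesis .
qed

lemma finite_Sset: "finite (Sset a n m)"
  unfolding Sset_def by auto

lemma nice_Y: "nice (Yf a n m c) (Ydf a n m c) (Sset a n m)"
  unfolding nice_def using finite_Sset Y_cont Y_deriv Yd_meas Yd_bound by blast

lemma nice_g: "nice (gf a n m c) (gdf a n m c) (Sset a n m)"
proof -
  have cont: "continuous_on UNIV (gf a n m c)"
  proof -
    have "continuous_on UNIV (\<lambda>x. Yf a n m c x * cnj (Yf a n m c x))"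
      by (intro continuous_on_mult continuous_on_cnj Y_cont)
    then show ?thesis by (simp add: gf_def[abs_def])
  qed
  have der: "(gf a n m c has_vector_derivative gdf a n m c x) (at x)" if x: "x \<notin> Sset a n m" for x
  proof -
    have "((\<lambda>x. Yf a n m c x * cnj (Yf a n m c x)) has_vector_derivative
       (Yf a n m c x * cnj (Ydf a n m c x) + Ydf a n m c x * cnj (Yf a n m c x))) (at x)"
      by (intro has_vector_derivative_mult has_vector_derivative_cnj Y_deriv x)
    then show ?thesis by (simp add: gf_def[abs_def] gdf_def add.commute)
  qed
  have meas: "gdf a n m c \<in> borel_measurable borel"
  proof -
    have "(\<lambda>x. Yf a n m c x) \<in> borel_measurable borel"
      using Y_cont by (intro borel_measurable_continuous_onI) 
    then show ?thesis unfolding gdf_def[abs_def] by measurable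
  qed
  define C0 where "C0 = (\<Sum>k\<in>{1..n-1}. norm (c k))"
  define C1 where "C1 = (\<Sum>k\<in>{1..n-1}. norm (c k) * Lk k)"
  have bd: "norm (gdf a n m c x) \<le> 2 * (C1 * C0)" for x
  proof -
    have "norm (gdf a n m c x) \<le> norm (Ydf a n m c x) * norm (Yf a n m c x) + norm (Yf a n m c x) * norm (Ydf a n m c x)"
      unfolding gdf_def by (rule order_trans[OF norm_triangle_ineq]) (simp add: norm_mult)
    also have "\<dots> \<le> C1 * C0 + C0 * C1"
      using Y_bound[of c x] Yd_bound[of c x] unfolding C0_def C1_def
      by (intro add_mono mult_mono) (auto intro: order_trans[OF norm_ge_zero])
    finally show ?thesis by (simp add: mult.commute)
  qed
  show ?thesis unfolding nice_def using finite_Sset cont der meas bd by blast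
qed

end

lemma telescope:
  fixes b w :: "nat \<Rightarrow> real"
  assumes "n \<ge> 1"
  shows "(\<Sum>k=1..n. b k * (w k - w (k-1))) = (\<Sum>k=1..n-1. w k * (b k - b (k+1))) - b 1 * w 0 + b n * w n"
  using assms
proof (induction n)
  case 0 then show ?case by simp
next
  case (Suc n)
  show ?case
  proof (cases "n = 0")
    case True then show ?thesis by (simp add: algebra_simps)
  next
    case False
    then have IH: "(\<Sum>k=1..n. b k * (w k - w (k-1))) = (\<Sum>k=1..n-1. w k * (b k - b (k+1))) - b 1 * w 0 + b n * w n"
      using Suc by simp
    have e: "(\<Sum>k=1..Suc n - 1. w k * (b k - b (k+1))) = (\<Sum>k=1..n-1. w k * (b k - b (k+1))) + w n * (b n - b (n+1))"
      using False by (cases n) (auto simp: sum.atLeast_Suc_atMost_Suc_shift)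
    show ?thesis using IH e by (simp add: algebra_simps)
  qed
qed

lemma sum_if_eq:
  fixes w :: "nat \<Rightarrow> real"
  assumes "finite A"
  shows "(\<Sum>k\<in>A. (if k = j \<and> Pr then X else 0) * w k) = (if Pr \<and> j \<in> A then X * w j else 0)"
  using assms by (cases Pr) (auto simp: if_distrib[of "\<lambda>x. x * w _"] sum.delta cong: if_cong)

context setting
begin

lemma zeta_split: "zeta n m d \<beta> k = (\<beta> (k+1) - \<beta> k) + (if k = m - 1 \<and> 2 \<le> m then d m * \<beta> 1 else 0)
    - (if k = m \<and> m \<le> n - 1 then d m * \<beta> n else 0)"
  unfolding zeta_def by auto

lemma zeta_sum:
  fixes w :: "nat \<Rightarrow> real"
  shows "(\<Sum>k=1..n-1. zeta n m d \<beta> k * w k) = (\<Sum>k=1..n-1. (\<beta> (k+1) - \<beta> k) * w k)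
     + (if 2 \<le> m then d m * \<beta> 1 * w (m-1) else 0) - (if m \<le> n-1 then d m * \<beta> n * w m else 0)"
proof -
  have "(\<Sum>k=1..n-1. zeta n m d \<beta> k * w k) = (\<Sum>k=1..n-1. (\<beta> (k+1) - \<beta> k) * w k
      + (if k = m - 1 \<and> 2 \<le> m then d m * \<beta> 1 else 0) * w k - (if k = m \<and> m \<le> n - 1 then d m * \<beta> n else 0) * w k)"
    by (rule sum.cong[OF refl]) (simp add: zeta_split algebra_simps)
  also have "\<dots> = (\<Sum>k=1..n-1. (\<beta> (k+1) - \<beta> k) * w k)
      + (\<Sum>k=1..n-1. (if k = m - 1 \<and> 2 \<le> m then d m * \<beta> 1 else 0) * w k)
      - (\<Sum>k=1..n-1. (if k = m \<and> m \<le> n - 1 then d m * \<beta> n else 0) * w k)"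
    by (simp add: sum.distrib sum_subtractf)
  also have "(\<Sum>k=1..n-1. (if k = m - 1 \<and> 2 \<le> m then d m * \<beta> 1 else 0) * w k)
     = (if 2 \<le> m then d m * \<beta> 1 * w (m-1) else 0)"
    by (subst sum_if_eq) (use m in auto)
  also have "(\<Sum>k=1..n-1. (if k = m \<and> m \<le> n - 1 then d m * \<beta> n else 0) * w k)
     = (if m \<le> n-1 then d m * \<beta> n * w m else 0)"
    by (subst sum_if_eq) (use m in auto)
  finally show ?thesis .
qed

end

context setting
begin

definition wv :: "(nat \<Rightarrow> complex) \<Rightarrow> nat \<Rightarrow> real" where
  "wv c j = (if j \<in> {1..n-1} then (cmod (c j))\<^sup>2 else 0)"

lemma Y_alpha: "j \<le> n \<Longrightarrow> Yf a n m c (alpha a j) = (if j \<in> {1..n-1} then c j else 0)"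
proof -
  assume j: "j \<le> n"
  have "Yf a n m c (alpha a j) = (\<Sum>k\<in>{1..n-1}. if k = j then c k else 0)"
    unfolding Yf_def by (rule sum.cong[OF refl]) (simp add: hk_at_alpha j)
  also have "\<dots> = (if j \<in> {1..n-1} then c j else 0)"
    by (simp add: sum.delta')
  finally show ?thesis .
qed

lemma g_alpha: "j \<le> n \<Longrightarrow> gf a n m c (alpha a j) = complex_of_real (wv c j)"
  by (simp add: gf_def Y_alpha wv_def complex_norm_square[symmetric] del: of_real_power)

lemma Y_zero_region:
  assumes x1: "alpha a (m-1) + (if m \<ge> 2 then a m * a 1 else 0) \<le> x"
    and x2: "x \<le> alpha a m - (if m \<le> n-1 then a m * a n else 0)"
  shows "Yf a n m c x = 0" "Ydf a n m c x = 0" "gf a n m c x = 0" "gdf a n m c x = 0"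
proof -
  have h: "hk a n m k x = 0 \<and> hkd a n m k x = 0" if k: "k \<in> {1..n-1}" for k
    using hk_zero_region[OF k x1 x2] gd_facts[OF k]
    unfolding hk_def hkd_def by (auto intro!: hat_zero hatd_zero)
  show "Yf a n m c x = 0" "Ydf a n m c x = 0" unfolding Yf_def Ydf_def by (auto simp: h)
  then show "gf a n m c x = 0" "gdf a n m c x = 0" by (auto simp: gf_def gdf_def)
qed

lemma Bform: "(LINT x:{0..1}|lborel. complex_of_real (Qf P x) * gdf a n m c x)
   = complex_of_real (- (\<Sum>k=1..n-1. zeta n m d \<beta> k * (cmod (c k))\<^sup>2))"
proof -
  define t where "t = alpha a (m-1)"
  define s where "s = a m"
  have s0: "s > 0" using apos m by (simp add: s_def)
  have ts: "t + s = alpha a m" using m by (simp add: t_def s_def alpha_prev)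
  define G where "G u = gf a n m c (t + s*u)" for u
  define G' where "G' u = complex_of_real s * gdf a n m c (t + s*u)" for u
  have nG: "nice G G' ((\<lambda>x. (x - t)/s) ` Sset a n m)"
    unfolding G_def[abs_def] G'_def[abs_def] by (rule nice_affine[OF nice_g]) (use s0 in simp)
  define v where "v j = (if j = 0 then wv c (m-1) else if j = n then wv c m else 0)" for j
  have Gv: "G (alpha a j) = complex_of_real (v j)" if j: "j \<le> n" for j
  proof -
    consider "j = 0" | "j = n" | "j \<in> {1..n-1}" using j by force
    then show ?thesis
    proof cases
      case 1
      have "m - 1 \<le> n" using m by auto
      from g_alpha[OF this] show ?thesis using 1 by (simp add: G_def v_def t_def)
    next
      case 2 then show ?thesis using n2 m by (simp add: G_def v_def ts alpha_n g_alpha)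
    next
      case 3
      then have "j \<noteq> 0" "j \<noteq> n" by auto
      then show ?thesis using region_alpha[OF 3] Y_zero_region(3)
        by (simp add: G_def v_def t_def s_def)
    qed
  qed
  have I2: "(LINT u:{0..1}|lborel. complex_of_real (Qf P u) * (complex_of_real (a m) * G' (alpha a (m-1) + a m * u))) = 0"
  proof -
    have pt: "complex_of_real (Qf P u) * (complex_of_real (a m) * G' (alpha a (m-1) + a m * u)) = 0"
      if u: "u \<in> {0..1}" for u
    proof -
      have su: "0 \<le> s*u" "s*u \<le> s" using u s0 by (auto simp: mult_left_le)
      have "t + s*u \<in> {alpha a (m-1)..alpha a m}"
        using su ts by (auto simp: t_def)
      then have "gdf a n m c (t + s * (t + s*u)) = 0"
        using region_Im Y_zero_region(4) unfolding t_def s_def by blast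
      then show ?thesis
        by (simp add: G'_def t_def s_def)
    qed
    have "(\<lambda>u. indicator {0..1} u *\<^sub>R (complex_of_real (Qf P u) * (complex_of_real (a m) * G' (alpha a (m-1) + a m * u)))) = (\<lambda>u. 0)"
    proof (rule ext)
      fix u
      show "indicator {0..1} u *\<^sub>R (complex_of_real (Qf P u) * (complex_of_real (a m) * G' (alpha a (m-1) + a m * u))) = 0"
        using pt[of u] by (cases "u \<in> {0..1}") simp_all
    qed
    then show ?thesis by (simp add: set_lebesgue_integral_def)
  qed
  have k1: "(LINT x:{0..1}|lborel. complex_of_real (Qf P x) * gdf a n m c x)
     = (\<Sum>k=1..n. complex_of_real (\<beta> k) * (gf a n m c (alpha a k) - gf a n m c (alpha a (k-1))))
       + complex_of_real (d m) * (LINT u:{0..1}|lborel. complex_of_real (Qf P u) * G' u)"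
    using key[OF nice_g] by (simp add: G'_def t_def s_def)
  have k2: "(LINT u:{0..1}|lborel. complex_of_real (Qf P u) * G' u)
     = (\<Sum>k=1..n. complex_of_real (\<beta> k) * (G (alpha a k) - G (alpha a (k-1))))"
    using key[OF nG] I2 by simp
  have s1: "(\<Sum>k=1..n. complex_of_real (\<beta> k) * (gf a n m c (alpha a k) - gf a n m c (alpha a (k-1))))
     = complex_of_real (\<Sum>k=1..n. \<beta> k * (wv c k - wv c (k-1)))"
  proof -
    have "(\<Sum>k=1..n. complex_of_real (\<beta> k) * (gf a n m c (alpha a k) - gf a n m c (alpha a (k-1))))
       = (\<Sum>k=1..n. complex_of_real (\<beta> k * (wv c k - wv c (k-1))))"
    proof (rule sum.cong[OF refl])
      fix k assume k: "k \<in> {1..n}"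
      have "k \<le> n" "k - 1 \<le> n" using k by auto
      then show "complex_of_real (\<beta> k) * (gf a n m c (alpha a k) - gf a n m c (alpha a (k-1)))
         = complex_of_real (\<beta> k * (wv c k - wv c (k-1)))" by (simp add: g_alpha)
    qed
    then show ?thesis by simp
  qed
  have s2: "(\<Sum>k=1..n. complex_of_real (\<beta> k) * (G (alpha a k) - G (alpha a (k-1))))
     = complex_of_real (\<Sum>k=1..n. \<beta> k * (v k - v (k-1)))"
  proof -
    have "(\<Sum>k=1..n. complex_of_real (\<beta> k) * (G (alpha a k) - G (alpha a (k-1))))
       = (\<Sum>k=1..n. complex_of_real (\<beta> k * (v k - v (k-1))))"
    proof (rule sum.cong[OF refl])
      fix k assume k: "k \<in> {1..n}"
      have "k \<le> n" "k - 1 \<le> n" using k by auto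
      then show "complex_of_real (\<beta> k) * (G (alpha a k) - G (alpha a (k-1)))
         = complex_of_real (\<beta> k * (v k - v (k-1)))" by (simp add: Gv)
    qed
    then show ?thesis by simp
  qed
  have w0: "wv c 0 = 0" "wv c n = 0" by (auto simp: wv_def)
  have r1: "(\<Sum>k=1..n. \<beta> k * (wv c k - wv c (k-1))) = (\<Sum>k=1..n-1. wv c k * (\<beta> k - \<beta> (k+1)))"
    using telescope[of n \<beta> "wv c"] n2 w0 by simp
  have v0: "(\<Sum>k=1..n-1. v k * (\<beta> k - \<beta> (k+1))) = 0"
    by (rule sum.neutral) (auto simp: v_def)
  have vn: "v 0 = wv c (m-1)" "v n = wv c m" using n2 by (auto simp: v_def)
  have r2: "(\<Sum>k=1..n. \<beta> k * (v k - v (k-1))) = - \<beta> 1 * wv c (m-1) + \<beta> n * wv c m"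
    using telescope[of n \<beta> v] n2 v0 vn by simp
  have e1: "(if 2 \<le> m then d m * \<beta> 1 * wv c (m-1) else 0) = d m * \<beta> 1 * wv c (m-1)"
    using m by (auto simp: wv_def)
  have e2: "(if m \<le> n-1 then d m * \<beta> n * wv c m else 0) = d m * \<beta> n * wv c m"
    using m by (auto simp: wv_def)
  have hS: "(\<Sum>k=1..n-1. wv c k * (\<beta> k - \<beta> (k+1))) = - (\<Sum>k=1..n-1. (\<beta> (k+1) - \<beta> k) * wv c k)"
    by (simp add: sum_negf[symmetric] algebra_simps)
  have r3: "(\<Sum>k=1..n-1. wv c k * (\<beta> k - \<beta> (k+1))) + d m * (- \<beta> 1 * wv c (m-1) + \<beta> n * wv c m)
      = - (\<Sum>k=1..n-1. zeta n m d \<beta> k * wv c k)"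
    unfolding zeta_sum e1 e2 hS by (simp add: algebra_simps)
  have r4: "(\<Sum>k=1..n-1. zeta n m d \<beta> k * wv c k) = (\<Sum>k=1..n-1. zeta n m d \<beta> k * (cmod (c k))\<^sup>2)"
    by (rule sum.cong) (auto simp: wv_def)
  have fin: "(\<Sum>k=1..n-1. wv c k * (\<beta> k - \<beta> (k+1))) + d m * (- \<beta> 1 * wv c (m-1) + \<beta> n * wv c m)
      = - (\<Sum>k=1..n-1. zeta n m d \<beta> k * (cmod (c k))\<^sup>2)"
    using r3 r4 by simp
  show ?thesis
    unfolding k1 k2 s1 s2 r1 r2
    using arg_cong[OF fin, of complex_of_real] by simp
qed

end

lemma fscale_vs: "vector_space fscale"
  by unfold_locales (auto simp: fscale_def fun_eq_iff algebra_simps)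

interpretation fs: vector_space fscale by (rule fscale_vs)

lemma sum_fun_apply: "(sum f A) x = (\<Sum>a\<in>A. f a x)"
  by (induction A rule: infinite_finite_induct) auto

lemma fscale_apply[simp]: "fscale c f x = c * f x" by (simp add: fscale_def)

context setting
begin

lemma ebasis_alpha: "j \<in> {1..n-1} \<Longrightarrow> k \<le> n \<Longrightarrow> ebasis a n m j (alpha a k) = (if j = k then 1 else 0)"
  by (simp add: ebasis_def hk_def[symmetric] hk_at_alpha)

lemma ebasis_hk: "ebasis a n m k = (\<lambda>x. complex_of_real (hk a n m k x))"
  by (simp add: ebasis_def hk_def)

lemma span_repr:
  assumes K: "K \<subseteq> {1..n-1}" and y: "y \<in> fs.span (ebasis a n m ` K)"
  shows "y = Yf a n m (\<lambda>k. y (alpha a k)) \<and> (\<forall>k\<in>{1..n-1}-K. y (alpha a k) = 0)"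
  using y
proof (induction rule: fs.span_induct_alt)
  case base
  show ?case by (simp add: Yf_def fun_eq_iff)
next
  case (step c x y)
  then obtain j where j: "j \<in> K" and xj: "x = ebasis a n m j" by auto
  have jn: "j \<in> {1..n-1}" using j K by auto
  have IH1: "y = Yf a n m (\<lambda>k. y (alpha a k))" and IH2: "\<forall>k\<in>{1..n-1}-K. y (alpha a k) = 0"
    using step.IH by blast+
  have ev: "(fscale c x + y) (alpha a k) = (if j = k then c else 0) + y (alpha a k)" if "k \<le> n" for k
    using that jn by (simp add: xj ebasis_alpha)
  have ev': "x (alpha a k) = (if j = k then 1 else 0)" if "k \<in> {1..n-1}" for k
  proof -
    have "k \<le> n" using that by auto
    from ebasis_alpha[OF jn this] show ?thesis by (simp add: xj)
  qed
  have A: "fscale c x + y = Yf a n m (\<lambda>k. (fscale c x + y) (alpha a k))"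
  proof (rule ext)
    fix t
    have "Yf a n m (\<lambda>k. (fscale c x + y) (alpha a k)) t
        = (\<Sum>k\<in>{1..n-1}. ((if j = k then c else 0) + y (alpha a k)) * complex_of_real (hk a n m k t))"
      unfolding Yf_def by (rule sum.cong[OF refl]) (auto simp: ev')
    also have "\<dots> = (\<Sum>k\<in>{1..n-1}. (if j = k then c * complex_of_real (hk a n m k t) else 0))
        + Yf a n m (\<lambda>k. y (alpha a k)) t"
      unfolding Yf_def by (simp add: sum.distrib distrib_right if_distrib[of "\<lambda>z. z * _"] cong: if_cong)
    also have "\<dots> = c * complex_of_real (hk a n m j t) + y t"
      using jn fun_cong[OF IH1[symmetric], of t] by (simp add: sum.delta)
    also have "\<dots> = (fscale c x + y) t" by (simp add: xj ebasis_hk)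
    finally show "(fscale c x + y) t = Yf a n m (\<lambda>k. (fscale c x + y) (alpha a k)) t" ..
  qed
  have B: "\<forall>k\<in>{1..n-1}-K. (fscale c x + y) (alpha a k) = 0"
  proof
    fix k assume k: "k \<in> {1..n-1}-K"
    then have "k \<noteq> j" "k \<in> {1..n-1}" using j by auto
    then show "(fscale c x + y) (alpha a k) = 0" using IH2 ev' k by auto
  qed
  show ?case using A B by blast
qed

lemma ebasis_inj: "inj_on (ebasis a n m) {1..n-1}"
proof (rule inj_onI)
  fix i j assume i: "i \<in> {1..n-1}" and j: "j \<in> {1..n-1}" and e: "ebasis a n m i = ebasis a n m j"
  have il: "i \<le> n" using i by auto
  have h1: "ebasis a n m i (alpha a i) = 1" using ebasis_alpha[OF i il] by (simp only: if_True simp_thms)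
  have h2: "ebasis a n m j (alpha a i) = (if j = i then 1 else 0)" by (rule ebasis_alpha[OF j il])
  have "ebasis a n m j (alpha a i) = 1" using h1 e by (simp only:)
  then show "i = j" using h2 by (cases "j = i") simp_all
qed

lemma ebasis_indep: "fs.independent (ebasis a n m ` {1..n-1})"
  unfolding fs.independent_explicit_module
proof (intro allI impI)
  fix t u v
  assume h1: "finite t" and h2: "t \<subseteq> ebasis a n m ` {1..n-1}" and h3: "(\<Sum>v\<in>t. fscale (u v) v) = 0"
    and h4: "v \<in> t"
  note h = h1 h2 h3 h4
  then obtain j where j: "j \<in> {1..n-1}" and vj: "v = ebasis a n m j" by auto
  have "0 = (\<Sum>w\<in>t. fscale (u w) w) (alpha a j)" using h by simp
  also have "\<dots> = (\<Sum>w\<in>t. u w * w (alpha a j))" by (simp add: sum_fun_apply)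
  also have "\<dots> = (\<Sum>w\<in>t. if w = v then u w else 0)"
  proof (rule sum.cong[OF refl])
    fix w assume w: "w \<in> t"
    then obtain k where k: "k \<in> {1..n-1}" and wk: "w = ebasis a n m k" using h by auto
    have jl: "j \<le> n" using j by auto
    have "w (alpha a j) = (if k = j then 1 else 0)" using ebasis_alpha[OF k jl] by (simp add: wk)
    moreover have "(w = v) = (k = j)" using inj_onD[OF ebasis_inj _ k j] by (auto simp: wk vj)
    ultimately show "u w * w (alpha a j) = (if w = v then u w else 0)" by simp
  qed
  also have "\<dots> = u v" using h by (simp add: sum.delta')
  finally show "u v = 0" by simp
qed

lemma dim_span_K: "K \<subseteq> {1..n-1} \<Longrightarrow> fs.dim (fs.span (ebasis a n m ` K)) = card K"
proof -
  assume K: "K \<subseteq> {1..n-1}"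
  have "fs.independent (ebasis a n m ` K)"
    by (rule fs.independent_mono[OF ebasis_indep]) (use K in auto)
  then have "fs.dim (fs.span (ebasis a n m ` K)) = card (ebasis a n m ` K)"
    by (rule fs.dim_span_eq_card_independent)
  also have "\<dots> = card K" by (rule card_image, rule inj_on_subset[OF ebasis_inj K])
  finally show ?thesis .
qed

end

lemma setint_cong_finite:
  fixes f g :: "real \<Rightarrow> complex"
  assumes S: "finite S" and fm: "f \<in> borel_measurable borel" and eq: "\<And>x. x \<notin> S \<Longrightarrow> g x = f x"
    and A: "A \<in> sets borel"
  shows "(LINT x:A|lborel. g x) = (LINT x:A|lborel. f x)"
proof -
  have gm: "g \<in> borel_measurable borel"
    by (rule measurable_discrete_difference[OF fm, of S]) (use S eq in \<open>auto intro: countable_finite\<close>)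
  have ae: "AE x in lborel. x \<notin> S" by (rule AE_not_in[OF finite_imp_null_set_lborel[OF S]])
  show ?thesis
  proof (rule set_lebesgue_integral_cong_AE)
    show "A \<in> sets lborel" using A by simp
    show "g \<in> borel_measurable lborel" using gm by simp
    show "f \<in> borel_measurable lborel" using fm by simp
    show "AE x\<in>A in lborel. g x = f x" using ae by (rule eventually_mono) (auto simp: eq)
  qed
qed

context setting
begin

definition NN :: "(nat \<Rightarrow> complex) \<Rightarrow> real" where
  "NN c = (LINT x:{0..1}|lborel. (cmod (Ydf a n m c x))\<^sup>2)"

lemma vd_Y: "x \<notin> Sset a n m \<Longrightarrow> vector_derivative (Yf a n m c) (at x) = Ydf a n m c x"
  by (rule vector_derivative_at[OF Y_deriv])

lemma vd_g: "x \<notin> Sset a n m \<Longrightarrow>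
   vector_derivative (\<lambda>t. Yf a n m c t * cnj (Yf a n m c t)) (at x) = gdf a n m c x"
proof -
  assume x: "x \<notin> Sset a n m"
  have "(gf a n m c has_vector_derivative gdf a n m c x) (at x)"
    using nice_g[of c] x unfolding nice_def by blast
  then have "vector_derivative (gf a n m c) (at x) = gdf a n m c x" by (rule vector_derivative_at)
  then show ?thesis by (simp add: gf_def[abs_def])
qed

lemma Ydf_int: "set_integrable lborel {0..1} (\<lambda>x. Ydf a n m c x * cnj (Ydf a n m c x))"
proof -
  define C1 where "C1 = (\<Sum>k\<in>{1..n-1}. norm (c k) * Lk k)"
  have "norm (Ydf a n m c x * cnj (Ydf a n m c x)) \<le> C1 * C1" for x
    using Yd_bound[of c x] unfolding C1_def norm_mult complex_mod_cnj
    by (intro mult_mono) (auto intro: order_trans[OF norm_ge_zero])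
  then show ?thesis by (intro setint_bdd) (measurable, assumption)
qed

lemma innerH_Y: "innerH (Yf a n m c) (Yf a n m c) = complex_of_real (NN c)"
proof -
  have "innerH (Yf a n m c) (Yf a n m c) = (LINT x:{0..1}|lborel. Ydf a n m c x * cnj (Ydf a n m c x))"
    unfolding innerH_def by (rule setint_cong_finite[OF finite_Sset]) (auto simp: vd_Y)
  also have "\<dots> = (LINT x:{0..1}|lborel. complex_of_real ((cmod (Ydf a n m c x))\<^sup>2))"
    by (simp only: complex_norm_square)
  also have "\<dots> = complex_of_real (NN c)" unfolding NN_def by (rule set_integral_complex_of_real)
  finally show ?thesis .
qed

lemma Cform_Y: "Cform P lam (Yf a n m c) (Yf a n m c) = innerH (Yf a n m c) (Yf a n m c)
    + complex_of_real lam * (LINT x:{0..1}|lborel. complex_of_real (Qf P x) * gdf a n m c x)"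
proof -
  obtain B where B: "\<And>x. norm (gdf a n m c x) \<le> B" and gm[measurable]: "gdf a n m c \<in> borel_measurable borel"
    using nice_g[of c] unfolding nice_def by blast
  have "Cform P lam (Yf a n m c) (Yf a n m c) = (LINT x:{0..1}|lborel.
      vector_derivative (Yf a n m c) (at x) * cnj (vector_derivative (Yf a n m c) (at x))
      + complex_of_real (lam * Qf P x) * vector_derivative (\<lambda>t. Yf a n m c t * cnj (Yf a n m c t)) (at x))"
    unfolding Cform_def by (rule set_lebesgue_integral_cong) (auto simp: Qf_def)
  also have "\<dots> = (LINT x:{0..1}|lborel. Ydf a n m c x * cnj (Ydf a n m c x)
      + complex_of_real lam * (complex_of_real (Qf P x) * gdf a n m c x))"
    by (rule setint_cong_finite[OF finite_Sset]) (auto simp: vd_Y vd_g)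
  also have "\<dots> = (LINT x:{0..1}|lborel. Ydf a n m c x * cnj (Ydf a n m c x))
      + (LINT x:{0..1}|lborel. complex_of_real lam * (complex_of_real (Qf P x) * gdf a n m c x))"
  proof (rule set_integral_add(2))
    show "set_integrable lborel {0..1} (\<lambda>x. Ydf a n m c x * cnj (Ydf a n m c x))" by (rule Ydf_int)
    have "set_integrable lborel {0..1} (\<lambda>x. complex_of_real (Qf P x) * gdf a n m c x)"
      by (rule setint_Q[OF Qint gm B]) simp
    then show "set_integrable lborel {0..1} (\<lambda>x. complex_of_real lam * (complex_of_real (Qf P x) * gdf a n m c x))"
      by simp
  qed
  also have "(LINT x:{0..1}|lborel. Ydf a n m c x * cnj (Ydf a n m c x)) = innerH (Yf a n m c) (Yf a n m c)"
    unfolding innerH_def by (rule setint_cong_finite[OF finite_Sset, symmetric]) (auto simp: vd_Y)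
  finally show ?thesis by simp
qed

lemma ReC_Y: "Re (Cform P lam (Yf a n m c) (Yf a n m c)) = NN c - lam * (\<Sum>k=1..n-1. zeta n m d \<beta> k * (cmod (c k))\<^sup>2)"
  unfolding Cform_Y innerH_Y Bform by simp

lemma ReH_Y: "Re (innerH (Yf a n m c) (Yf a n m c)) = NN c"
  unfolding innerH_Y by simp

lemma NN_nonneg: "0 \<le> NN c"
  unfolding NN_def set_lebesgue_integral_def by (intro integral_nonneg_AE AE_I2) (simp add: indicator_def)

end

context setting
begin

definition KK :: real where "KK = (\<Sum>k\<in>{1..n-1}. Lk k)\<^sup>2"

lemma Lk_pos: "k \<in> {1..n-1} \<Longrightarrow> 0 < Lk k"
  using gd_facts[of k] unfolding Lk_def by (auto intro!: add_pos_pos)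

lemma NN_upper: "NN c \<le> KK * (\<Sum>k\<in>{1..n-1}. (cmod (c k))\<^sup>2)"
proof -
  define R where "R = (\<Sum>k\<in>{1..n-1}. (cmod (c k))\<^sup>2)"
  define r where "r = sqrt R"
  have R0: "0 \<le> R" unfolding R_def by (rule sum_nonneg) simp
  have ck: "cmod (c k) \<le> r" if k: "k \<in> {1..n-1}" for k
  proof -
    have "(cmod (c k))\<^sup>2 \<le> R" unfolding R_def
      by (rule member_le_sum[OF k]) auto
    then have "sqrt ((cmod (c k))\<^sup>2) \<le> sqrt R" by (rule real_sqrt_le_mono)
    then show ?thesis by (simp add: r_def)
  qed
  have pt: "(cmod (Ydf a n m c x))\<^sup>2 \<le> KK * R" for x
  proof -
    have "cmod (Ydf a n m c x) \<le> (\<Sum>k\<in>{1..n-1}. cmod (c k) * Lk k)" by (rule Yd_bound)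
    also have "\<dots> \<le> (\<Sum>k\<in>{1..n-1}. r * Lk k)"
      by (rule sum_mono) (use ck Lk_pos in \<open>auto intro: mult_right_mono less_imp_le\<close>)
    also have "\<dots> = r * (\<Sum>k\<in>{1..n-1}. Lk k)" by (simp add: sum_distrib_left)
    finally have le: "cmod (Ydf a n m c x) \<le> r * (\<Sum>k\<in>{1..n-1}. Lk k)" .
    have "(cmod (Ydf a n m c x))\<^sup>2 \<le> (r * (\<Sum>k\<in>{1..n-1}. Lk k))\<^sup>2"
      by (rule power_mono[OF le]) simp
    also have "\<dots> = KK * R" using R0 by (simp add: KK_def r_def power_mult_distrib)
    finally show ?thesis .
  qed
  have i1: "set_integrable lborel {0..1} (\<lambda>x. (cmod (Ydf a n m c x))\<^sup>2)"
    by (rule setint_bdd[where B="KK * R"]) (measurable, use pt in simp)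
  have i2: "set_integrable lborel {0..1::real} (\<lambda>x. KK * R)"
    by (intro borel_integrable_atLeastAtMost' continuous_intros)
  have "NN c \<le> (LINT x:{0..1::real}|lborel. KK * R)"
    unfolding NN_def
  proof (rule set_integral_mono)
    show "set_integrable lborel {0..1} (\<lambda>x. (cmod (Ydf a n m c x))\<^sup>2)" by (rule i1)
    show "set_integrable lborel {0..1::real} (\<lambda>x. KK * R)" by (rule i2)
    show "\<And>x. x \<in> {0..1} \<Longrightarrow> (cmod (Ydf a n m c x))\<^sup>2 \<le> KK * R" by (rule pt)
  qed
  also have "\<dots> = KK * R" by (subst set_integral_const) (auto simp: emeasure_lborel_Icc_eq)
  finally show ?thesis by (simp add: R_def)
qed

lemma NN_zero:
  assumes z: "NN c = 0" and k: "k \<in> {1..n-1}"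
  shows "c k = 0"
proof -
  have i1: "integrable lborel (\<lambda>x. indicator {0..1} x *\<^sub>R (cmod (Ydf a n m c x))\<^sup>2)"
  proof -
    have "norm (Ydf a n m c x * cnj (Ydf a n m c x)) = (cmod (Ydf a n m c x))\<^sup>2" for x
      by (simp add: norm_mult power2_eq_square)
    then show ?thesis using Ydf_int[of c] unfolding set_integrable_def
      by (subst (asm) integrable_norm_iff[symmetric]) (simp_all add: norm_mult)
  qed
  have "AE x in lborel. indicator {0..1} x *\<^sub>R (cmod (Ydf a n m c x))\<^sup>2 = 0"
    using z unfolding NN_def set_lebesgue_integral_def
    by (subst (asm) integral_nonneg_eq_0_iff_AE[OF i1]) (auto simp: indicator_def)
  then have ae: "AE x in lborel. x \<in> {0..1} \<longrightarrow> Ydf a n m c x = 0"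
    by (rule eventually_mono) (auto simp: indicator_def)
  have kn: "k \<le> n" using k by auto
  have aj: "alpha a k \<le> 1" "0 \<le> alpha a k" using alpha_le1[OF kn] alpha_nonneg[OF kn] by auto
  have "(LINT x:{0..alpha a k}|lborel. Ydf a n m c x) = Yf a n m c (alpha a k) - Yf a n m c 0"
    by (rule ftc_leb[OF nice_Y]) (use aj in simp)
  also have "\<dots> = c k"
    using Y_alpha[OF kn, of c] Y_alpha[of 0 c] k by simp
  finally have e: "(LINT x:{0..alpha a k}|lborel. Ydf a n m c x) = c k" .
  have "(LINT x:{0..alpha a k}|lborel. Ydf a n m c x) = 0"
    unfolding set_lebesgue_integral_def
    by (rule integral_eq_zero_AE) (use ae aj in \<open>auto elim!: eventually_mono simp: indicator_def\<close>)
  then show ?thesis using e by simp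
qed

end

context setting
begin

definition Kp :: "nat set" where "Kp = {k \<in> {1..n-1}. zeta n m d \<beta> k > 0}"
definition Km :: "nat set" where "Km = {1..n-1} - Kp"

lemma span_repr': "K \<subseteq> {1..n-1} \<Longrightarrow> y \<in> fs.span (ebasis a n m ` K) \<Longrightarrow>
   y = Yf a n m (\<lambda>k. y (alpha a k)) \<and> (\<forall>k\<in>{1..n-1}-K. y (alpha a k) = 0)"
  by (rule span_repr)

lemma forms:
  assumes y: "y \<in> fs.span (ebasis a n m ` {1..n-1})"
  shows "Re (Cform P lam y y) = NN (\<lambda>k. y (alpha a k)) - lam * (\<Sum>k=1..n-1. zeta n m d \<beta> k * (cmod (y (alpha a k)))\<^sup>2)"
    "Re (innerH y y) = NN (\<lambda>k. y (alpha a k))"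
proof -
  have e: "y = Yf a n m (\<lambda>k. y (alpha a k))" using span_repr[OF _ y] by blast
  show "Re (Cform P lam y y) = NN (\<lambda>k. y (alpha a k)) - lam * (\<Sum>k=1..n-1. zeta n m d \<beta> k * (cmod (y (alpha a k)))\<^sup>2)"
    by (subst (1 2) e) (rule ReC_Y)
  show "Re (innerH y y) = NN (\<lambda>k. y (alpha a k))"
    by (subst (1 2) e) (rule ReH_Y)
qed

lemma KK_nonneg: "0 \<le> KK" by (simp add: KK_def)

definition Lam :: real where "Lam = 1 + (\<Sum>k\<in>Kp. 2 * KK / zeta n m d \<beta> k)"

lemma lower:
  assumes lam: "lam \<ge> Lam"
  shows "\<forall>y\<in>fs.span (ebasis a n m ` Kp). Re (Cform P lam y y) \<le> - 1 * Re (innerH y y)"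
proof
  fix y assume y: "y \<in> fs.span (ebasis a n m ` Kp)"
  have Kp_sub: "Kp \<subseteq> {1..n-1}" by (auto simp: Kp_def)
  have yH: "y \<in> fs.span (ebasis a n m ` {1..n-1})"
    using y fs.span_mono[of "ebasis a n m ` Kp" "ebasis a n m ` {1..n-1}"] Kp_sub by auto
  define c where "c = (\<lambda>k. y (alpha a k))"
  have c0: "\<forall>k\<in>{1..n-1}-Kp. c k = 0" using span_repr[OF Kp_sub y] by (simp add: c_def)
  have termwise: "2 * KK * (cmod (c k))\<^sup>2 \<le> lam * (zeta n m d \<beta> k * (cmod (c k))\<^sup>2)"
    if k: "k \<in> {1..n-1}" for k
  proof (cases "k \<in> Kp")
    case True
    then have z: "zeta n m d \<beta> k > 0" by (simp add: Kp_def)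
    have "2 * KK / zeta n m d \<beta> k \<le> (\<Sum>k\<in>Kp. 2 * KK / zeta n m d \<beta> k)"
      by (rule member_le_sum[OF True]) (use KK_nonneg in \<open>auto simp: Kp_def\<close>)
    then have "2 * KK / zeta n m d \<beta> k \<le> lam" using lam by (simp add: Lam_def)
    then have "2 * KK \<le> lam * zeta n m d \<beta> k" using z by (simp add: divide_le_eq)
    then have "2 * KK * (cmod (c k))\<^sup>2 \<le> lam * zeta n m d \<beta> k * (cmod (c k))\<^sup>2"
      by (rule mult_right_mono) simp
    then show ?thesis by (simp add: mult.assoc)
  next
    case False
    then show ?thesis using c0 k by simp
  qed
  have "2 * KK * (\<Sum>k=1..n-1. (cmod (c k))\<^sup>2) \<le> lam * (\<Sum>k=1..n-1. zeta n m d \<beta> k * (cmod (c k))\<^sup>2)"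
    unfolding sum_distrib_left by (rule sum_mono) (use termwise in auto)
  moreover have "NN c \<le> KK * (\<Sum>k\<in>{1..n-1}. (cmod (c k))\<^sup>2)" by (rule NN_upper)
  moreover have "Re (Cform P lam y y) = NN c - lam * (\<Sum>k=1..n-1. zeta n m d \<beta> k * (cmod (c k))\<^sup>2)"
    "Re (innerH y y) = NN c" using forms[OF yH] by (simp_all add: c_def)
  ultimately show "Re (Cform P lam y y) \<le> - 1 * Re (innerH y y)"
    by linarith
qed

lemma MN_trivial:
  assumes lam: "lam > 0" and eps: "eps > 0"
    and cond: "\<forall>y\<in>M. Re (Cform P lam y y) \<le> - eps * Re (innerH y y)"
    and yM: "y \<in> M" and yN: "y \<in> fs.span (ebasis a n m ` Km)"
  shows "y = 0"
proof -
  have Km_sub: "Km \<subseteq> {1..n-1}" by (auto simp: Km_def)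
  have yH: "y \<in> fs.span (ebasis a n m ` {1..n-1})"
    using yN fs.span_mono[of "ebasis a n m ` Km" "ebasis a n m ` {1..n-1}"] Km_sub by auto
  define c where "c = (\<lambda>k. y (alpha a k))"
  have rep: "y = Yf a n m c" "\<forall>k\<in>{1..n-1}-Km. c k = 0" using span_repr[OF Km_sub yN] by (simp_all add: c_def)
  have nonpos: "zeta n m d \<beta> k * (cmod (c k))\<^sup>2 \<le> 0" if k: "k \<in> {1..n-1}" for k
  proof (cases "k \<in> Km")
    case True
    then have "zeta n m d \<beta> k \<le> 0" by (auto simp: Km_def Kp_def)
    then show ?thesis by (simp add: mult_nonpos_nonneg)
  next
    case False
    then show ?thesis using rep(2) k by simp
  qed
  have "(\<Sum>k=1..n-1. zeta n m d \<beta> k * (cmod (c k))\<^sup>2) \<le> 0"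
    by (rule sum_nonpos) (use nonpos in auto)
  then have "lam * (\<Sum>k=1..n-1. zeta n m d \<beta> k * (cmod (c k))\<^sup>2) \<le> 0"
    using lam by (simp add: mult_nonneg_nonpos)
  moreover have "Re (Cform P lam y y) \<le> - eps * Re (innerH y y)" using cond yM by blast
  then have "Re (Cform P lam y y) \<le> - eps * NN c" using forms(2)[OF yH] by (simp add: c_def)
  moreover have "0 \<le> NN c" by (rule NN_nonneg)
  moreover have "Re (Cform P lam y y) = NN c - lam * (\<Sum>k=1..n-1. zeta n m d \<beta> k * (cmod (c k))\<^sup>2)"
    "Re (innerH y y) = NN c" using forms[OF yH] by (simp_all add: c_def)
  ultimately have "NN c \<le> - eps * NN c"
    by linarith
  moreover have "0 \<le> eps * NN c" using eps \<open>0 \<le> NN c\<close> by simp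
  ultimately have "NN c = 0" using \<open>0 \<le> NN c\<close> by linarith
  then have "\<forall>k\<in>{1..n-1}. c k = 0" using NN_zero by blast
  then show "y = 0" using rep(1) by (simp add: Yf_def fun_eq_iff)
qed

end

context setting
begin

lemma dim_bound:
  assumes Ms: "fs.subspace M" and MH: "M \<subseteq> H2 a n m"
    and triv: "\<And>y. y \<in> M \<Longrightarrow> y \<in> fs.span (ebasis a n m ` Km) \<Longrightarrow> y = 0"
  shows "fs.dim M \<le> card Kp"
proof -
  obtain B where B: "B \<subseteq> M" "fs.independent B" "M \<subseteq> fs.span B" "card B = fs.dim M"
    using fs.basis_exists by blast
  define F where "F = ebasis a n m ` Km"
  define T where "T = ebasis a n m ` {1..n-1}"
  have KmT: "Km \<subseteq> {1..n-1}" by (auto simp: Km_def)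
  have KpT: "Kp \<subseteq> {1..n-1}" by (auto simp: Kp_def)
  have FT: "F \<subseteq> T" using KmT by (auto simp: F_def T_def)
  have indF: "fs.independent F" by (rule fs.independent_mono[OF ebasis_indep]) (use FT in \<open>simp add: T_def\<close>)
  have finT: "finite T" by (simp add: T_def)
  have H2T: "H2 a n m = fs.span T" by (simp add: H2_def T_def)
  have BT: "B \<subseteq> fs.span T" using B(1) MH H2T by auto
  have finB: "finite B" using fs.independent_span_bound[OF finT B(2) BT] by simp
  have finF: "finite F" using finite_subset[OF FT finT] .
  have spanB: "fs.span B \<subseteq> M" by (rule fs.span_minimal[OF B(1) Ms])
  have disj: "B \<inter> F = {}"
  proof (rule ccontr)
    assume "B \<inter> F \<noteq> {}"
    then obtain b where b: "b \<in> B" "b \<in> F" by auto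
    have "b = 0" by (rule triv) (use b B(1) fs.span_base[of b F] in \<open>auto simp: F_def\<close>)
    then have "fs.dependent B" using b(1) fs.dependent_zero by simp
    then show False using B(2) by simp
  qed
  have indBF: "fs.independent (B \<union> F)"
    unfolding fs.independent_explicit_module
  proof (intro allI impI)
    fix t u v
    assume t1: "finite t" and t2: "t \<subseteq> B \<union> F" and t3: "(\<Sum>v\<in>t. fscale (u v) v) = 0" and v: "v \<in> t"
    define s1 where "s1 = (\<Sum>v\<in>t \<inter> B. fscale (u v) v)"
    define s2 where "s2 = (\<Sum>v\<in>t - B. fscale (u v) v)"
    have s12: "s1 + s2 = 0" using t3 sum.Int_Diff[OF t1, of "\<lambda>v. fscale (u v) v" B] by (simp add: s1_def s2_def)
    have s1B: "s1 \<in> fs.span B" unfolding s1_def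
      by (intro fs.span_sum fs.span_scale fs.span_base) auto
    have s2F: "s2 \<in> fs.span F" unfolding s2_def
      by (intro fs.span_sum fs.span_scale fs.span_base) (use t2 in auto)
    have "s1 = - s2" using s12 by (simp add: eq_neg_iff_add_eq_0)
    then have s1F: "s1 \<in> fs.span F" using fs.span_neg[OF s2F] by simp
    have s10: "s1 = 0" by (rule triv) (use s1B spanB s1F in \<open>auto simp: F_def\<close>)
    then have s20: "s2 = 0" using s12 by simp
    show "u v = 0"
    proof (cases "v \<in> B")
      case True
      show ?thesis
        by (rule fs.independentD[OF B(2) _ _ s10[unfolded s1_def]]) (use t1 True v in auto)
    next
      case False
      show ?thesis
        by (rule fs.independentD[OF indF _ _ s20[unfolded s2_def]]) (use t1 t2 False v in auto)
    qed
  qed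
  have BFT: "B \<union> F \<subseteq> fs.span T" using BT FT fs.span_superset[of T] by auto
  have "card (B \<union> F) \<le> card T" using fs.independent_span_bound[OF finT indBF BFT] by simp
  moreover have "card (B \<union> F) = card B + card F" by (rule card_Un_disjoint[OF finB finF disj])
  moreover have "card T = n - 1" unfolding T_def by (subst card_image[OF ebasis_inj]) simp
  moreover have "card F = card Km" unfolding F_def by (rule card_image, rule inj_on_subset[OF ebasis_inj KmT])
  moreover have "card Km = (n - 1) - card Kp" unfolding Km_def by (subst card_Diff_subset) (use KpT in \<open>auto intro: finite_subset\<close>)
  moreover have "card Kp \<le> n - 1" using card_mono[OF _ KpT] by simp
  ultimately show ?thesis using B(4) by linarith
qed

lemma Lam_ge1: "1 \<le> Lam"
proof -
  have "0 \<le> (\<Sum>k\<in>Kp. 2 * KK / zeta n m d \<beta> k)"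
    by (rule sum_nonneg) (use KK_nonneg in \<open>auto simp: Kp_def\<close>)
  then show ?thesis by (simp add: Lam_def)
qed

lemma ind_eq:
  assumes lam: "lam \<ge> Lam"
  shows "ind (Cform P lam) (H2 a n m) = enat (Zplus n m d \<beta>)"
proof -
  have lam0: "lam > 0" using lam Lam_ge1 by simp
  have Z: "Zplus n m d \<beta> = card Kp" by (simp add: Zplus_def Kp_def)
  define S where "S = {enat (vector_space.dim fscale M) | M.
      module.subspace fscale M \<and> M \<subseteq> H2 a n m \<and>
      (\<exists>eps>0. \<forall>y\<in>M. Re (Cform P lam y y) \<le> - eps * Re (innerH y y))}"
  have KpT: "Kp \<subseteq> {1..n-1}" by (auto simp: Kp_def)
  have mem: "enat (card Kp) \<in> S"
  proof -
    have "fs.span (ebasis a n m ` Kp) \<subseteq> H2 a n m"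
      unfolding H2_def by (rule fs.span_mono) (use KpT in auto)
    moreover have "\<exists>eps>0. \<forall>y\<in>fs.span (ebasis a n m ` Kp). Re (Cform P lam y y) \<le> - eps * Re (innerH y y)"
      using lower[OF lam] by (intro exI[of _ 1]) simp
    ultimately show ?thesis unfolding S_def using dim_span_K[OF KpT]
      by (intro CollectI exI[of _ "fs.span (ebasis a n m ` Kp)"]) auto
  qed
  have ub: "x \<le> enat (card Kp)" if x: "x \<in> S" for x
  proof -
    obtain M eps where M: "x = enat (fs.dim M)" "fs.subspace M" "M \<subseteq> H2 a n m" "eps > 0"
      "\<forall>y\<in>M. Re (Cform P lam y y) \<le> - eps * Re (innerH y y)"
      using x unfolding S_def by blast
    have "fs.dim M \<le> card Kp"
      by (rule dim_bound[OF M(2) M(3)]) (rule MN_trivial[OF lam0 M(4) M(5)])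
    then show ?thesis using M(1) by simp
  qed
  have "Sup S = enat (card Kp)"
    by (rule antisym) (auto intro: Sup_least Sup_upper mem ub)
  then show ?thesis unfolding ind_def S_def[symmetric] Z .
qed

end

theorem mainTheorem4:
  fixes n m :: nat and a d \<beta> :: "nat \<Rightarrow> real" and P :: "real \<Rightarrow> real"
  assumes n2: "n \<ge> 2"
    and apos: "\<And>k. k \<in> {1..n} \<Longrightarrow> a k > 0"
    and asum: "(\<Sum>k=1..n. a k) = 1"
    and dsum: "(\<Sum>k=1..n. a k * (d k)\<^sup>2) < 1"
    and m: "m \<in> {1..n}"
    and dzero: "\<And>k. k \<in> {1..n} \<Longrightarrow> k \<noteq> m \<Longrightarrow> d k = 0"
    and Pmeas: "set_borel_measurable lborel {0..1} P"
    and PL2: "set_integrable lborel {0..1} (\<lambda>x. (P x)\<^sup>2)"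
    and Pself: "\<And>k. k \<in> {1..n} \<Longrightarrow>
       AE x in lborel. x \<in> {0..1} \<longrightarrow> P (alpha a (k - 1) + a k * x) = \<beta> k + d k * P x"
  shows "\<forall>\<^sub>F lam in at_top. ind (Cform P lam) (H2 a n m) = enat (Zplus n m d \<beta>)"
proof -
  interpret setting n m a d \<beta> P
    by (rule setting.intro) (fact n2, fact apos, fact asum, fact m, fact dzero, fact Pmeas, fact PL2, fact Pself)
  show ?thesis
    unfolding eventually_at_top_linorder by (intro exI[of _ Lam] allI impI ind_eq)
qed

end
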